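(* Every probabilistic function computed by a probabilistic Turing machine is probabilistic recursive: $\mathscr{PC}\subseteq\mathscr{PR}$.
   Context: A pseudodistribution on a countable set $X$ is $\mathcal D:X\to[0,1]$ with $\sum_x\mathcal D(x)\le1$; $\mathcal D(X)$ is their set. A PF of arity $k$ is a function $\mathbb{N}^k\to\mathcal D(\mathbb{N})$. Basic PFs: $z(n)(0)=1$; $s(n)(n+1)=1$; $\Pi^n_m(k_1,\dots,k_n)(k_m)=1$; $r(x)(x)=r(x)(x+1)=1/2$ (other values $0$). Generalized composition $(f\odot(g_1,\dots,g_n))(\vec x)(y)=\sum_{z_1,\dots,z_n} f(z_1,\dots,z_n)(y)\prod_i g_i(\vec x)(z_i)$; primitive recursion $h=\mathrm{rec}(f,g)$: $h(\vec x,0)=f(\vec x)$, $h(\vec x,y+1)(w)=\sum_z h(\vec x,y)(z)\, g(\vec x,y,z)(w)$; minimization $\mu f(\vec x)(y)=f(\vec x,y)(0)\prod_{z<y}\sum_{k>0}f(\vec x,z)(k)$. $\mathscr{PR}$ is the smallest class of PFs containing the basic PFs and closed under these three operations. PTMs: Turing machines with tape alphabet $\Sigma_b\supseteq\{0,1\}$ plus blank, states $Q$, initial $q_s$, final states $Q_f$, and two transition functions $\delta_0,\delta_1$ on non-final configurations, each applied with probability $1/2$; configurations $\langle s,a,t,q\rangle$, initial configuration on $a\cdot v$ is $\langle\varepsilon,a,v,q_s\rangle$, final configuration with output $s$ is $\langle s,a,\varepsilon,q\rangle$, $q\in Q_f$. $\mathcal{IO}_M(s)(t)=\sum 2^{-|b|}$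 over choice sequences $b\in\{0,1\}^*$ that from the initial configuration on $s$ first reach a final configuration with output $t$ after exactly $|b|$ steps. With $n\mapsto\overline n$ the length-lexicographic bijection $\mathbb{N}\to\{0,1\}^*$ and $\langle\vec x\rangle$ a fixed computable string encoding of tuples, $\mathscr{PC}$ is the set of PFs $f$ with $f(\vec x)(y)=\mathcal{IO}_M(\langle\vec x\rangle)(\overline y)$ for some PTM $M$ and all $\vec x,y$. *)

theory Defs
  imports "HOL-Analysis.Infinite_Sum"
begin

text \<open>A PF of arity k is modelled as a function on argument lists (only lists of
length k are meaningful) returning a (pseudo)distribution on nat, i.e. a
function nat to real.\<close>

type_synonym pf = "nat list \<Rightarrow> nat \<Rightarrow> real"

primrec prec :: "pf \<Rightarrow> pf \<Rightarrow> nat list \<Rightarrow> nat \<Rightarrow> nat \<Rightarrow> real" where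
  "prec f g xs 0 = f xs"
| "prec f g xs (Suc y) =
     (\<lambda>w. \<Sum>\<^sub>\<infinity>z\<in>UNIV. prec f g xs y z * g (xs @ [y, z]) w)"

definition pf_comp :: "pf \<Rightarrow> pf list \<Rightarrow> pf" where
  "pf_comp f gs = (\<lambda>xs y. \<Sum>\<^sub>\<infinity>zs\<in>{zs. length zs = length gs}.
      f zs y * (\<Prod>i<length gs. (gs ! i) xs (zs ! i)))"

definition pf_rec :: "pf \<Rightarrow> pf \<Rightarrow> pf" where
  "pf_rec f g = (\<lambda>xs. prec f g (butlast xs) (last xs))"

definition pf_mu :: "pf \<Rightarrow> pf" where
  "pf_mu f = (\<lambda>xs y. f (xs @ [y]) 0 *
      (\<Prod>z<y. \<Sum>\<^sub>\<infinity>k\<in>{0<..}. f (xs @ [z]) k))"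

inductive PR :: "nat \<Rightarrow> pf \<Rightarrow> bool" where
  PR_zero: "PR 1 (\<lambda>xs y. if y = 0 then 1 else 0)"
| PR_succ: "PR 1 (\<lambda>xs y. if y = Suc (hd xs) then 1 else 0)"
| PR_proj: "1 \<le> m \<Longrightarrow> m \<le> n \<Longrightarrow> PR n (\<lambda>xs y. if y = xs ! (m - 1) then 1 else 0)"
| PR_rand: "PR 1 (\<lambda>xs y. if y = hd xs \<or> y = Suc (hd xs) then 1 / 2 else 0)"
| PR_comp: "PR (length gs) f \<Longrightarrow> (\<forall>g\<in>set gs. PR k g) \<Longrightarrow> PR k (pf_comp f gs)"
| PR_rec: "PR k f \<Longrightarrow> PR (k + 2) g \<Longrightarrow> PR (k + 1) (pf_rec f g)"
| PR_mu: "PR (k + 1) f \<Longrightarrow> PR k (pf_mu f)"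

datatype move = MLeft | MRight | MStay

text \<open>Tape symbols: Some a for a in the alphabet, None is the blank.
Bits 0 and 1 are Some 0 and Some 1.\<close>
type_synonym sym = "nat option"

record ptm =
  states :: "nat set"
  alphabet :: "nat set"
  start :: nat
  finals :: "nat set"
  delta0 :: "nat \<Rightarrow> sym \<Rightarrow> nat \<times> sym \<times> move"
  delta1 :: "nat \<Rightarrow> sym \<Rightarrow> nat \<times> sym \<times> move"

definition wf_ptm :: "ptm \<Rightarrow> bool" where
  "wf_ptm M \<longleftrightarrow> finite (states M) \<and> finite (alphabet M) \<and> {0, 1} \<subseteq> alphabet M
     \<and> start M \<in> states M \<and> finals M \<subseteq> states M
     \<and> (\<forall>q\<in>states M - finals M. \<forall>a\<in>insert None (Some ` alphabet M).
          delta0 M q a \<in> states M \<times> insert None (Some ` alphabet M) \<times> UNIV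
        \<and> delta1 M q a \<in> states M \<times> insert None (Some ` alphabet M) \<times> UNIV)"

text \<open>Configuration (s, a, t, q): s left of the head (left to right), a under the
head, t right of the head, q the state.\<close>
type_synonym config = "sym list \<times> sym \<times> sym list \<times> nat"

fun apply_move :: "sym list \<Rightarrow> sym \<Rightarrow> sym list \<Rightarrow> nat \<Rightarrow> move \<Rightarrow> config" where
  "apply_move s a t q MStay = (s, a, t, q)"
| "apply_move s a t q MRight =
     (s @ [a], (if t = [] then None else hd t), tl t, q)"
| "apply_move s a t q MLeft =
     (if s = [] then ([], None, a # t, q) else (butlast s, last s, a # t, q))"

fun step :: "ptm \<Rightarrow> bool \<Rightarrow> config \<Rightarrow> config" where
  "step M b (s, a, t, q) =
     (if q \<in> finals M then (s, a, t, q)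
      else (case (if b then delta1 M else delta0 M) q a of
              (q', a', m) \<Rightarrow> apply_move s a' t q' m))"

text \<open>Run following a sequence of choices (False = delta0, True = delta1).\<close>
definition run :: "ptm \<Rightarrow> bool list \<Rightarrow> config \<Rightarrow> config" where
  "run M bs c = fold (step M) bs c"

definition initial :: "ptm \<Rightarrow> sym list \<Rightarrow> config" where
  "initial M v = (if v = [] then ([], None, [], start M) else ([], hd v, tl v, start M))"

definition is_final :: "ptm \<Rightarrow> config \<Rightarrow> bool" where
  "is_final M c \<longleftrightarrow> snd (snd (snd c)) \<in> finals M"

definition halts_with :: "ptm \<Rightarrow> sym list \<Rightarrow> bool list \<Rightarrow> sym list \<Rightarrow> bool" where
  "halts_with M v bs u \<longleftrightarrow>
     (\<forall>i<length bs. \<not> is_final M (run M (take i bs) (initial M v)))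
     \<and> (\<exists>a q. run M bs (initial M v) = (u, a, [], q) \<and> q \<in> finals M)"

definition IO :: "ptm \<Rightarrow> sym list \<Rightarrow> sym list \<Rightarrow> real" where
  "IO M v u = (\<Sum>\<^sub>\<infinity>bs\<in>{bs. halts_with M v bs u}. (1 / 2) ^ length bs)"

text \<open>Length-lexicographic bijection nat to binary strings:
0 to empty, 1 to 0, 2 to 1, 3 to 00, ...\<close>
fun bin :: "nat \<Rightarrow> nat list" where
  "bin 0 = []"
| "bin (Suc n) = bin (n div 2) @ [n mod 2]"

definition bits :: "nat list \<Rightarrow> sym list" where
  "bits w = map Some w"

definition enc_tuple :: "nat list \<Rightarrow> nat list" where
  "enc_tuple xs = concat (map (\<lambda>x. concat (map (\<lambda>b. [b, b]) (bin x)) @ [0, 1]) xs)"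

definition PC :: "nat \<Rightarrow> pf \<Rightarrow> bool" where
  "PC k f \<longleftrightarrow> (\<exists>M. wf_ptm M \<and>
     (\<forall>xs y. length xs = k \<longrightarrow> f xs y = IO M (bits (enc_tuple xs)) (bits (bin y))))"

end

theory Submission
  imports Defs "HOL-Library.Nat_Bijection"
begin


definition dirac :: "(nat list \<Rightarrow> nat) \<Rightarrow> pf" where
  "dirac h = (\<lambda>xs y. if y = h xs then 1 else 0)"

definition PRE :: "nat \<Rightarrow> pf \<Rightarrow> bool" where
  "PRE k f \<longleftrightarrow> (\<exists>F. PR k F \<and> (\<forall>xs. length xs = k \<longrightarrow> F xs = f xs))"

definition PRD :: "nat \<Rightarrow> (nat list \<Rightarrow> nat) \<Rightarrow> bool" where
  "PRD k h \<longleftrightarrow> PRE k (dirac h)"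

lemma infsum_single_supp:
  fixes f :: "'a \<Rightarrow> real"
  assumes "a \<in> A" "\<And>x. x \<in> A \<Longrightarrow> x \<noteq> a \<Longrightarrow> f x = 0"
  shows "infsum f A = f a"
proof -
  have "infsum f A = infsum f {a}"
    by (rule infsum_cong_neutral) (use assms in auto)
  then show ?thesis by simp
qed

lemma infsum_zero_supp:
  fixes f :: "'a \<Rightarrow> real"
  assumes "\<And>x. x \<in> A \<Longrightarrow> f x = 0"
  shows "infsum f A = 0"
  using assms by (simp add: infsum_0)

lemma PRE_cong: "PRE k f \<Longrightarrow> (\<And>xs. length xs = k \<Longrightarrow> f xs = g xs) \<Longrightarrow> PRE k g"
  unfolding PRE_def by metis

lemma PRD_cong: "PRD k f \<Longrightarrow> (\<And>xs. length xs = k \<Longrightarrow> f xs = g xs) \<Longrightarrow> PRD k g"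
  unfolding PRD_def by (erule PRE_cong) (simp add: dirac_def)

lemma PR_PRE: "PR k F \<Longrightarrow> PRE k F"
  unfolding PRE_def by auto

lemma list_choice:
  assumes "\<forall>g\<in>set gs. \<exists>G. P g G"
  shows "\<exists>Gs. length Gs = length gs \<and> (\<forall>i<length gs. P (gs!i) (Gs!i))"
  using assms
proof (induction gs)
  case Nil then show ?case by simp
next
  case (Cons g gs)
  then obtain Gs where Gs: "length Gs = length gs" "\<forall>i<length gs. P (gs!i) (Gs!i)" by auto
  from Cons.prems obtain G where "P g G" by auto
  then show ?case using Gs
    by (intro exI[of _ "G#Gs"]) (auto simp: nth_Cons split: nat.splits)
qed

lemma PRE_comp:
  assumes f: "PRE (length gs) f" and gs: "\<forall>g\<in>set gs. PRE k g"
  shows "PRE k (pf_comp f gs)"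
proof -
  from f obtain F where F: "PR (length gs) F" "\<And>zs. length zs = length gs \<Longrightarrow> F zs = f zs"
    unfolding PRE_def by auto
  from gs have "\<forall>g\<in>set gs. \<exists>G. PR k G \<and> (\<forall>xs. length xs = k \<longrightarrow> G xs = g xs)"
    unfolding PRE_def by auto
  from list_choice[OF this] obtain Gs where Gs: "length Gs = length gs"
    "\<And>i. i < length gs \<Longrightarrow> PR k (Gs!i) \<and> (\<forall>xs. length xs = k \<longrightarrow> (Gs!i) xs = (gs!i) xs)"
    by auto
  have "PR (length Gs) F" using F Gs by simp
  moreover have "\<forall>G\<in>set Gs. PR k G" using Gs by (auto simp: in_set_conv_nth)
  ultimately have "PR k (pf_comp F Gs)" by (rule PR_comp)
  moreover have "pf_comp F Gs xs = pf_comp f gs xs" if "length xs = k" for xs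
  proof (rule ext)
    fix y
    show "pf_comp F Gs xs y = pf_comp f gs xs y"
      unfolding pf_comp_def Gs(1)
    proof (rule infsum_cong)
      fix zs :: "nat list" assume "zs \<in> {zs. length zs = length gs}"
      then have "length zs = length gs" using Gs by simp
      then show "F zs y * (\<Prod>i<length gs. (Gs ! i) xs (zs ! i)) =
           f zs y * (\<Prod>i<length gs. (gs ! i) xs (zs ! i))"
        using Gs that by (auto intro!: prod.cong simp: F(2))
    qed
  qed
  ultimately show ?thesis unfolding PRE_def by auto
qed

lemma PRE_rec:
  assumes f: "PRE k f" and g: "PRE (k+2) g"
  shows "PRE (k+1) (pf_rec f g)"
proof -
  from f obtain F where F: "PR k F" "\<And>zs. length zs = k \<Longrightarrow> F zs = f zs"
    unfolding PRE_def by auto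
  from g obtain G where G: "PR (k+2) G" "\<And>zs. length zs = k+2 \<Longrightarrow> G zs = g zs"
    unfolding PRE_def by auto
  have "PR (k+1) (pf_rec F G)" using F G by (intro PR_rec) auto
  moreover have "prec F G xs y = prec f g xs y" if "length xs = k" for xs y
    using that by (induction y) (auto simp: F G)
  ultimately show ?thesis unfolding PRE_def pf_rec_def
    by (intro exI[of _ "pf_rec F G"]) (auto simp: pf_rec_def)
qed

lemma PRE_mu:
  assumes f: "PRE (k+1) f"
  shows "PRE k (pf_mu f)"
proof -
  from f obtain F where F: "PR (k+1) F" "\<And>zs. length zs = k+1 \<Longrightarrow> F zs = f zs"
    unfolding PRE_def by auto
  have "PR k (pf_mu F)" using F by (intro PR_mu)
  moreover have "pf_mu F xs = pf_mu f xs" if "length xs = k" for xs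
    using that by (auto simp: pf_mu_def F)
  ultimately show ?thesis unfolding PRE_def by auto
qed

lemma prod_indicator:
  "(\<Prod>i<(n::nat). (if P i then 1 else 0 :: real)) = (if \<forall>i<n. P i then 1 else 0)"
  by (induction n) (auto simp: less_Suc_eq)

lemma comp_dirac:
  assumes "length hs = n"
  shows "pf_comp F (map dirac hs) xs y = F (map (\<lambda>h. h xs) hs) y"
proof -
  let ?a = "map (\<lambda>h. h xs) hs"
  have "pf_comp F (map dirac hs) xs y =
     (\<Sum>\<^sub>\<infinity>zs\<in>{zs. length zs = length hs}. F zs y * (if \<forall>i<length hs. zs!i = (hs!i) xs then 1 else 0))"
    unfolding pf_comp_def by (simp add: dirac_def prod_indicator)
  also have "\<dots> = F ?a y * (if \<forall>i<length hs. ?a!i = (hs!i) xs then 1 else 0)"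
    by (rule infsum_single_supp) (auto intro: nth_equalityI)
  finally show ?thesis by simp
qed

definition projs :: "nat \<Rightarrow> (nat list \<Rightarrow> nat) list" where
  "projs k = map (\<lambda>i xs. xs ! i) [0..<k]"

lemma map_projs: "length xs \<ge> k \<Longrightarrow> map (\<lambda>h. h xs) (projs k) = take k xs"
  unfolding projs_def by (auto intro: nth_equalityI)

lemma length_projs[simp]: "length (projs k) = k" by (simp add: projs_def)

lemma bind_lemma:
  assumes "length xs = k"
  shows "pf_comp F (map dirac (projs k) @ [G]) xs y = (\<Sum>\<^sub>\<infinity>z\<in>UNIV. G xs z * F (xs @ [z]) y)"
proof -
  let ?gs = "map dirac (projs k) @ [G]"
  have prodeq: "(\<Prod>i<Suc k. (?gs ! i) xs (zs ! i)) =
      (if take k zs = xs then G xs (zs!k) else 0)" if "length zs = Suc k" for zs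
  proof -
    have "(\<Prod>i<Suc k. (?gs ! i) xs (zs ! i)) =
      (\<Prod>i<k. (?gs ! i) xs (zs ! i)) * G xs (zs!k)"
      by (simp add: nth_append)
    also have "(\<Prod>i<k. (?gs ! i) xs (zs ! i)) = (\<Prod>i<k. (if zs!i = xs!i then 1 else 0))"
      by (intro prod.cong) (auto simp: nth_append projs_def dirac_def)
    also have "\<dots> = (if take k zs = xs then 1 else 0)"
    proof -
      have "(\<forall>i<k. zs!i = xs!i) \<longleftrightarrow> take k zs = xs"
        using that assms by (auto intro!: nth_equalityI) (metis nth_take)
      then show ?thesis unfolding prod_indicator by simp
    qed
    finally show ?thesis by simp
  qed
  have "pf_comp F ?gs xs y = (\<Sum>\<^sub>\<infinity>zs\<in>{zs. length zs = Suc k}.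
        F zs y * (if take k zs = xs then G xs (zs!k) else 0))"
  proof -
    have l: "length ?gs = Suc k" by simp
    show ?thesis unfolding pf_comp_def l by (rule infsum_cong, subst prodeq) auto
  qed
  also have "\<dots> = (\<Sum>\<^sub>\<infinity>zs\<in>(\<lambda>z. xs @ [z]) ` UNIV.
        F zs y * (if take k zs = xs then G xs (zs!k) else 0))"
  proof (rule infsum_cong_neutral)
    fix zs assume "zs \<in> {zs. length zs = Suc k} - range (\<lambda>z. xs @ [z])"
    then have "length zs = Suc k" "zs \<notin> range (\<lambda>z. xs @ [z])" by auto
    moreover have "take k zs = xs \<Longrightarrow> zs = xs @ [zs ! k]"
    proof -
      assume t: "take k zs = xs"
      have "drop k zs = [zs!k]" using \<open>length zs = Suc k\<close>
        by (metis Cons_nth_drop_Suc drop_all lessI order_refl)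
      then show ?thesis using t by (metis append_take_drop_id)
    qed
    ultimately show "F zs y * (if take k zs = xs then G xs (zs!k) else 0) = 0" by auto
  qed (use assms in auto)
  also have "\<dots> = (\<Sum>\<^sub>\<infinity>z\<in>UNIV. G xs z * F (xs @ [z]) y)"
    using assms by (subst infsum_reindex) (auto simp: inj_on_def o_def mult.commute nth_append)
  finally show ?thesis .
qed




primrec natrec :: "nat \<Rightarrow> (nat \<Rightarrow> nat \<Rightarrow> nat) \<Rightarrow> nat \<Rightarrow> nat" where
  "natrec a F 0 = a"
| "natrec a F (Suc n) = F n (natrec a F n)"

lemma PRD_proj: "i < n \<Longrightarrow> PRD n (\<lambda>xs. xs ! i)"
  unfolding PRD_def dirac_def
  using PR_proj[of "Suc i" n] by (intro PR_PRE) simp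

lemma PRD_zero1: "PRD 1 (\<lambda>xs. 0)"
  unfolding PRD_def dirac_def using PR_zero by (intro PR_PRE) simp

lemma PRD_succ1: "PRD 1 (\<lambda>xs. Suc (hd xs))"
  unfolding PRD_def dirac_def using PR_succ by (intro PR_PRE) simp

lemma PRD_comp:
  assumes "PRD n f" "length hs = n" "\<forall>h\<in>set hs. PRD k h"
  shows "PRD k (\<lambda>xs. f (map (\<lambda>h. h xs) hs))"
proof -
  have "PRE k (pf_comp (dirac f) (map dirac hs))"
    using assms by (intro PRE_comp) (auto simp: PRD_def)
  then show ?thesis unfolding PRD_def
    by (rule PRE_cong) (auto simp: comp_dirac[OF refl] dirac_def)
qed

lemma prec_dirac:
  "prec (dirac f) (dirac g) xs y = dirac (\<lambda>xs. natrec (f xs) (\<lambda>i acc. g (xs @ [i, acc])) y) xs"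
proof (induction y)
  case 0 then show ?case by (simp add: dirac_def)
next
  case (Suc y)
  show ?case
  proof (rule ext)
    fix w
    let ?R = "natrec (f xs) (\<lambda>i acc. g (xs @ [i, acc])) y"
    have "prec (dirac f) (dirac g) xs (Suc y) w =
      (\<Sum>\<^sub>\<infinity>z\<in>UNIV. dirac (\<lambda>xs. natrec (f xs) (\<lambda>i acc. g (xs @ [i, acc])) y) xs z * dirac g (xs @ [y, z]) w)"
      by (simp add: Suc)
    also have "\<dots> = dirac g (xs @ [y, ?R]) w"
      by (subst infsum_single_supp[of ?R]) (auto simp: dirac_def)
    finally show "prec (dirac f) (dirac g) xs (Suc y) w = dirac (\<lambda>xs. natrec (f xs) (\<lambda>i acc. g (xs @ [i, acc])) (Suc y)) xs w"
      by (simp add: dirac_def)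
  qed
qed

lemma PRD_rec:
  assumes "PRD k f" "PRD (k+2) g"
  shows "PRD (k+1) (\<lambda>xs. natrec (f (butlast xs)) (\<lambda>i acc. g (butlast xs @ [i, acc])) (last xs))"
proof -
  have "PRE (k+1) (pf_rec (dirac f) (dirac g))"
    using assms by (intro PRE_rec) (auto simp: PRD_def)
  then show ?thesis unfolding PRD_def
    by (rule PRE_cong) (simp add: pf_rec_def prec_dirac, simp add: dirac_def)
qed

lemma mu_dirac:
  "pf_mu (dirac h) xs y = (if h (xs @ [y]) = 0 \<and> (\<forall>z<y. h (xs @ [z]) \<noteq> 0) then 1 else 0)"
proof -
  have s: "(\<Sum>\<^sub>\<infinity>k\<in>{0<..}. dirac h (xs @ [z]) k) = (if h (xs @ [z]) \<noteq> 0 then 1 else 0)" for z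
  proof (cases "h (xs @ [z]) = 0")
    case True then show ?thesis by (subst infsum_zero_supp) (auto simp: dirac_def)
  next
    case False then show ?thesis
      by (subst infsum_single_supp[of "h (xs @ [z])"]) (auto simp: dirac_def)
  qed
  show ?thesis unfolding pf_mu_def s prod_indicator by (simp add: dirac_def)
qed

lemma PRE_mu_dirac:
  assumes "PRD (k+1) h"
  shows "PRE k (\<lambda>xs y. if h (xs @ [y]) = 0 \<and> (\<forall>z<y. h (xs @ [z]) \<noteq> 0) then 1 else 0)"
proof -
  have "PRE k (pf_mu (dirac h))" using assms by (intro PRE_mu) (simp add: PRD_def)
  then show ?thesis by (rule PRE_cong) (simp add: mu_dirac[abs_def])
qed

lemma PRD_mu:
  assumes "PRD (k+1) h" "\<And>xs. length xs = k \<Longrightarrow> \<exists>y. h (xs @ [y]) = 0"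
  shows "PRD k (\<lambda>xs. LEAST y. h (xs @ [y]) = 0)"
  unfolding PRD_def
proof (rule PRE_cong[OF PRE_mu_dirac[OF assms(1)]])
  fix xs :: "nat list" assume "length xs = k"
  then obtain y0 where y0: "h (xs @ [y0]) = 0" using assms(2) by auto
  show "(\<lambda>y. if h (xs @ [y]) = 0 \<and> (\<forall>z<y. h (xs @ [z]) \<noteq> 0) then 1 else 0) =
        dirac (\<lambda>xs. LEAST y. h (xs @ [y]) = 0) xs"
  proof (rule ext)
    fix y
    have "(h (xs @ [y]) = 0 \<and> (\<forall>z<y. h (xs @ [z]) \<noteq> 0)) \<longleftrightarrow> y = (LEAST y. h (xs @ [y]) = 0)"
    proof
      assume "h (xs @ [y]) = 0 \<and> (\<forall>z<y. h (xs @ [z]) \<noteq> 0)"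
      then show "y = (LEAST y. h (xs @ [y]) = 0)"
        by (intro Least_equality[symmetric]) (auto simp: not_less[symmetric])
    next
      assume "y = (LEAST y. h (xs @ [y]) = 0)"
      then show "h (xs @ [y]) = 0 \<and> (\<forall>z<y. h (xs @ [z]) \<noteq> 0)"
        using LeastI[of "\<lambda>y. h (xs @ [y]) = 0", OF y0] not_less_Least by auto
    qed
    then show "(if h (xs @ [y]) = 0 \<and> (\<forall>z<y. h (xs @ [z]) \<noteq> 0) then 1 else 0) =
        dirac (\<lambda>xs. LEAST y. h (xs @ [y]) = 0) xs y"
      by (simp add: dirac_def)
  qed
qed

lemma PRD_cong': "PRD k f \<Longrightarrow> k = k' \<Longrightarrow> (\<And>xs. length xs = k' \<Longrightarrow> f xs = g xs) \<Longrightarrow> PRD k' g"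
  using PRD_cong by blast

lemma PRD_mu2:
  assumes "PRD m h" "m = Suc k" "\<And>xs. length xs = k \<Longrightarrow> \<exists>y. h (xs @ [y]) = 0"
  shows "PRD k (\<lambda>xs. LEAST y. h (xs @ [y]) = 0)"
  using PRD_mu[of k h] assms by simp

lemma PRD_comp1: "PRD 1 f \<Longrightarrow> PRD k g \<Longrightarrow> PRD k (\<lambda>xs. f [g xs])"
  using PRD_comp[of 1 f "[g]" k] by simp

lemma PRD_comp2: "PRD 2 f \<Longrightarrow> PRD k g \<Longrightarrow> PRD k h \<Longrightarrow> PRD k (\<lambda>xs. f [g xs, h xs])"
  using PRD_comp[of 2 f "[g, h]" k] by simp

lemma PRD_comp3: "PRD 3 f \<Longrightarrow> PRD k g \<Longrightarrow> PRD k h \<Longrightarrow> PRD k u \<Longrightarrow> PRD k (\<lambda>xs. f [g xs, h xs, u xs])"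
  using PRD_comp[of 3 f "[g, h, u]" k] by (simp add: numeral_3_eq_3)

lemma PRD_projs: "k \<le> m \<Longrightarrow> \<forall>h\<in>set (projs k). PRD m h"
  unfolding projs_def by (auto intro: PRD_proj)

lemma PRD_projs': "h \<in> set (projs k) \<Longrightarrow> k \<le> m \<Longrightarrow> PRD m h"
  using PRD_projs by blast

lemma PRD_lift: "PRD k h \<Longrightarrow> k \<le> m \<Longrightarrow> PRD m (\<lambda>ys. h (take k ys))"
  using PRD_comp[of k h "projs k" m]
  by (auto simp: PRD_projs intro: PRD_cong simp: map_projs)

lemma PRD_zero: "PRD k (\<lambda>xs. 0)"
proof -
  have "PRD k (\<lambda>xs. LEAST y. (xs @ [y]) ! k = 0)"
    by (rule PRD_mu) (auto intro: PRD_proj)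
  then show ?thesis by (rule PRD_cong) (auto simp: nth_append)
qed

lemma PRD_Suc: "PRD k g \<Longrightarrow> PRD k (\<lambda>xs. Suc (g xs))"
  using PRD_comp1[OF PRD_succ1] by simp

lemma PRD_const: "PRD k (\<lambda>xs. c)"
  by (induction c) (auto intro: PRD_zero PRD_Suc)

lemma natrec_add: "natrec a (\<lambda>i acc. Suc acc) b = a + b"
  by (induction b) auto

lemma PRD_add2: "PRD 2 (\<lambda>xs. xs!0 + xs!1)"
proof -
  have "PRD (1+1) (\<lambda>xs. natrec ((\<lambda>xs. xs!0) (butlast xs)) (\<lambda>i acc. (\<lambda>ys. Suc (ys!2)) (butlast xs @ [i, acc])) (last xs))"
    by (rule PRD_rec) (auto intro!: PRD_proj PRD_Suc)
  then show ?thesis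
    by (rule PRD_cong') (auto simp: natrec_add length_Suc_conv numeral_2_eq_2)
qed

lemma natrec_pred: "natrec 0 (\<lambda>i acc. i) b = b - 1"
  by (induction b) auto

lemma PRD_pred1: "PRD 1 (\<lambda>xs. hd xs - 1)"
proof -
  have "PRD (0+1) (\<lambda>xs. natrec ((\<lambda>xs. 0) (butlast xs)) (\<lambda>i acc. (\<lambda>ys. ys!0) (butlast xs @ [i, acc])) (last xs))"
    by (rule PRD_rec) (auto intro!: PRD_proj PRD_const)
  then show ?thesis
    by (rule PRD_cong') (auto simp: natrec_pred length_Suc_conv)
qed

lemma PRD_pred: "PRD k f \<Longrightarrow> PRD k (\<lambda>xs. f xs - 1)"
  using PRD_comp1[OF PRD_pred1] by simp

lemma natrec_sub: "natrec a (\<lambda>i acc. acc - Suc 0) b = a - b"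
  by (induction b) auto

lemma PRD_sub2: "PRD 2 (\<lambda>xs. xs!0 - xs!1)"
proof -
  have "PRD (1+1) (\<lambda>xs. natrec ((\<lambda>xs. xs!0) (butlast xs)) (\<lambda>i acc. (\<lambda>ys. ys!2 - 1) (butlast xs @ [i, acc])) (last xs))"
    by (rule PRD_rec; (intro PRD_pred PRD_proj)?; simp)
  then show ?thesis
    by (rule PRD_cong') (auto simp: natrec_sub length_Suc_conv numeral_2_eq_2)
qed

lemma PRD_add: "PRD k f \<Longrightarrow> PRD k g \<Longrightarrow> PRD k (\<lambda>xs. f xs + g xs)"
  using PRD_comp2[OF PRD_add2] by simp

lemma PRD_sub: "PRD k f \<Longrightarrow> PRD k g \<Longrightarrow> PRD k (\<lambda>xs. f xs - g xs)"
  using PRD_comp2[OF PRD_sub2] by simp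

lemma natrec_mult: "natrec 0 (\<lambda>i acc. acc + a) b = a * b"
  by (induction b) auto

lemma PRD_mult2: "PRD 2 (\<lambda>xs. xs!0 * xs!1)"
proof -
  have "PRD (1+1) (\<lambda>xs. natrec ((\<lambda>xs. 0) (butlast xs)) (\<lambda>i acc. (\<lambda>ys. ys!2 + ys!0) (butlast xs @ [i, acc])) (last xs))"
    by (rule PRD_rec) (auto intro!: PRD_proj PRD_add PRD_const)
  then show ?thesis
    by (rule PRD_cong') (auto simp: natrec_mult length_Suc_conv numeral_2_eq_2)
qed

lemma PRD_mult: "PRD k f \<Longrightarrow> PRD k g \<Longrightarrow> PRD k (\<lambda>xs. f xs * g xs)"
  using PRD_comp2[OF PRD_mult2] by simp

definition PRP :: "nat \<Rightarrow> (nat list \<Rightarrow> bool) \<Rightarrow> bool" where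
  "PRP k P \<longleftrightarrow> PRD k (\<lambda>xs. if P xs then 1 else 0)"

lemma PRP_cong: "PRP k P \<Longrightarrow> (\<And>xs. length xs = k \<Longrightarrow> P xs = Q xs) \<Longrightarrow> PRP k Q"
  unfolding PRP_def by (erule PRD_cong) simp

lemma PRP_True: "PRP k (\<lambda>xs. True)" unfolding PRP_def by (simp add: PRD_const)
lemma PRP_False: "PRP k (\<lambda>xs. False)" unfolding PRP_def by (simp add: PRD_const)

lemma PRP_eq: "PRD k f \<Longrightarrow> PRD k g \<Longrightarrow> PRP k (\<lambda>xs. f xs = g xs)"
  unfolding PRP_def
  by (rule PRD_cong[of _ "\<lambda>xs. 1 - ((f xs - g xs) + (g xs - f xs))"]) (auto intro!: PRD_sub PRD_add PRD_const)

lemma PRP_less: "PRD k f \<Longrightarrow> PRD k g \<Longrightarrow> PRP k (\<lambda>xs. f xs < g xs)"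
  unfolding PRP_def
  by (rule PRD_cong[of _ "\<lambda>xs. 1 - (1 - (g xs - f xs))"]) (auto intro!: PRD_sub PRD_const)

lemma PRP_not: "PRP k P \<Longrightarrow> PRP k (\<lambda>xs. \<not> P xs)"
  unfolding PRP_def
  by (rule PRD_cong[of _ "\<lambda>xs. 1 - (if P xs then 1 else 0)"]) (auto intro!: PRD_sub PRD_const)

lemma PRP_le: "PRD k f \<Longrightarrow> PRD k g \<Longrightarrow> PRP k (\<lambda>xs. f xs \<le> g xs)"
  using PRP_not[OF PRP_less[of k g f]] by (simp add: not_less)

lemma PRP_conj: "PRP k P \<Longrightarrow> PRP k Q \<Longrightarrow> PRP k (\<lambda>xs. P xs \<and> Q xs)"
  unfolding PRP_def
  by (rule PRD_cong[of _ "\<lambda>xs. (if P xs then 1 else 0) * (if Q xs then 1 else 0)"]) (auto intro!: PRD_mult)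

lemma PRP_disj: "PRP k P \<Longrightarrow> PRP k Q \<Longrightarrow> PRP k (\<lambda>xs. P xs \<or> Q xs)"
  using PRP_not[OF PRP_conj[OF PRP_not PRP_not, of k P Q]] by simp

lemma PRD_if: "PRP k P \<Longrightarrow> PRD k f \<Longrightarrow> PRD k g \<Longrightarrow> PRD k (\<lambda>xs. if P xs then f xs else g xs)"
  unfolding PRP_def
  by (rule PRD_cong[of _ "\<lambda>xs. (if P xs then 1 else 0) * f xs + (1 - (if P xs then 1 else 0)) * g xs"])
     (auto intro!: PRD_mult PRD_add PRD_sub PRD_const)

lemma aux_lt: "b \<noteq> 0 \<Longrightarrow> a < Suc a * (b::nat)"
  by (cases b) auto

lemma PRD_div2: "PRD 2 (\<lambda>xs. xs!0 div xs!1)"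
proof -
  let ?h = "\<lambda>ys. if ys!1 = 0 \<or> ys!0 < Suc (ys!2) * ys!1 then 0 else (1::nat)"
  have "PRD 2 (\<lambda>xs. LEAST q. ?h (xs @ [q]) = 0)"
  proof (rule PRD_mu2[where m=3 and k=2])
    show "PRD 3 ?h"
      by (intro PRD_if PRP_disj PRP_eq PRP_less PRD_mult PRD_Suc PRD_proj PRD_const) auto
    fix xs :: "nat list" assume "length xs = 2"
    then show "\<exists>y. ?h (xs @ [y]) = 0"
      using aux_lt[of "xs!1" "xs!0"] by (intro exI[of _ "xs!0"]) (auto simp: nth_append)
  qed simp
  then show ?thesis
  proof (rule PRD_cong)
    fix xs :: "nat list" assume l: "length xs = 2"
    let ?a = "xs!0" and ?b = "xs!1"
    have e: "?h (xs @ [q]) = 0 \<longleftrightarrow> ?b = 0 \<or> ?a < Suc q * ?b" for q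
      using l by (auto simp: nth_append)
    have "(LEAST q. ?b = 0 \<or> ?a < Suc q * ?b) = ?a div ?b"
    proof (rule Least_equality)
      show "?b = 0 \<or> ?a < Suc (?a div ?b) * ?b"
        by (metis add.commute div_mult_mod_eq mod_less_divisor mult_Suc nat_add_left_cancel_less
             neq0_conv)
      fix y assume "?b = 0 \<or> ?a < Suc y * ?b"
      then show "?a div ?b \<le> y"
        by (metis div_le_mono div_mult_self1_is_m less_Suc_eq_le less_mult_imp_div_less
             zero_less_iff_neq_zero div_by_0 le0)
    qed
    then show "(LEAST q. ?h (xs @ [q]) = 0) = ?a div ?b" by (simp only: e)
  qed
qed

lemma PRD_div: "PRD k f \<Longrightarrow> PRD k g \<Longrightarrow> PRD k (\<lambda>xs. f xs div g xs)"
  using PRD_comp2[OF PRD_div2] by simp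

lemma PRD_mod: "PRD k f \<Longrightarrow> PRD k g \<Longrightarrow> PRD k (\<lambda>xs. f xs mod g xs)"
  apply (rule PRD_cong[of _ "\<lambda>xs. f xs - (f xs div g xs) * g xs"])
  apply (intro PRD_sub PRD_mult PRD_div; assumption)
  by (simp add: minus_div_mult_eq_mod)

lemma natrec_pow: "natrec (Suc 0) (\<lambda>i acc. acc + acc) b = 2 ^ b"
  by (induction b) auto

lemma PRD_pow2_1: "PRD 1 (\<lambda>xs. 2 ^ hd xs)"
proof -
  have "PRD (0+1) (\<lambda>xs. natrec ((\<lambda>xs. 1) (butlast xs)) (\<lambda>i acc. (\<lambda>ys. ys!1 + ys!1) (butlast xs @ [i, acc])) (last xs))"
    by (rule PRD_rec) (auto intro!: PRD_proj PRD_const PRD_add)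
  then show ?thesis
    by (rule PRD_cong') (auto simp: natrec_pow length_Suc_conv)
qed

lemma PRD_pow2: "PRD k f \<Longrightarrow> PRD k (\<lambda>xs. 2 ^ f xs)"
  using PRD_comp1[OF PRD_pow2_1] by simp

lemma PRD_natrec:
  assumes "PRD k f" "PRD (k+2) g" "PRD k n"
  shows "PRD k (\<lambda>xs. natrec (f xs) (\<lambda>i acc. g (xs @ [i, acc])) (n xs))"
proof -
  have r: "PRD (k+1) (\<lambda>xs. natrec (f (butlast xs)) (\<lambda>i acc. g (butlast xs @ [i, acc])) (last xs))"
    by (rule PRD_rec[OF assms(1,2)])
  have "PRD k (\<lambda>xs. (\<lambda>xs. natrec (f (butlast xs)) (\<lambda>i acc. g (butlast xs @ [i, acc])) (last xs))
           (map (\<lambda>h. h xs) (projs k @ [n])))"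
    using assms by (intro PRD_comp[OF r]) (auto intro: PRD_projs')
  then show ?thesis by (rule PRD_cong) (simp add: map_projs)
qed

lemma PRD_iter:
  assumes "PRD k f" "PRD (k+1) s" "PRD k n"
  shows "PRD k (\<lambda>xs. ((\<lambda>acc. s (xs @ [acc])) ^^ n xs) (f xs))"
proof -
  have g: "PRD (k+2) (\<lambda>ys. s (take k ys @ [ys ! (k+1)]))"
  proof -
    have "PRD (k+2) (\<lambda>ys. s (map (\<lambda>h. h ys) (projs k @ [\<lambda>ys. ys ! (k+1)])))"
      using assms by (intro PRD_comp[OF assms(2)]) (auto intro: PRD_projs' PRD_proj)
    then show ?thesis by (rule PRD_cong) (simp add: map_projs)
  qed
  have nf: "natrec a (\<lambda>i acc. s (xs @ [acc])) m = ((\<lambda>acc. s (xs @ [acc])) ^^ m) a" for a m xs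
    by (induction m) auto
  have "PRD k (\<lambda>xs. natrec (f xs) (\<lambda>i acc. (\<lambda>ys. s (take k ys @ [ys ! (k+1)])) (xs @ [i, acc])) (n xs))"
    using assms(1) g assms(3) by (rule PRD_natrec)
  then show ?thesis
  proof (rule PRD_cong)
    fix xs :: "nat list" assume "length xs = k"
    then have "natrec (f xs) (\<lambda>i acc. (\<lambda>ys. s (take k ys @ [ys ! (k+1)])) (xs @ [i, acc])) (n xs)
       = natrec (f xs) (\<lambda>i acc. s (xs @ [acc])) (n xs)" by (simp add: nth_append)
    then show "natrec (f xs) (\<lambda>i acc. (\<lambda>ys. s (take k ys @ [ys ! (k+1)])) (xs @ [i, acc])) (n xs) =
         ((\<lambda>acc. s (xs @ [acc])) ^^ n xs) (f xs)" by (simp only: nf)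
  qed
qed

lemma PRD_tri: "PRD k f \<Longrightarrow> PRD k (\<lambda>xs. triangle (f xs))"
  unfolding triangle_def by (intro PRD_div PRD_mult PRD_Suc PRD_const)

lemma PRD_enc: "PRD k f \<Longrightarrow> PRD k g \<Longrightarrow> PRD k (\<lambda>xs. prod_encode (f xs, g xs))"
  unfolding prod_encode_def by (auto intro!: PRD_add PRD_tri)

definition tri_root :: "nat \<Rightarrow> nat" where
  "tri_root n = (LEAST s. n < triangle (Suc s))"

lemma triangle_ge: "n < triangle (Suc n)"
  by (induction n) auto

lemma triangle_mono: "a \<le> b \<Longrightarrow> triangle a \<le> triangle b"
  by (induction b) (auto simp: le_Suc_eq)

lemma tri_root_props: "triangle (tri_root n) \<le> n" "n < triangle (Suc (tri_root n))"
proof -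
  show "n < triangle (Suc (tri_root n))" unfolding tri_root_def
    by (rule LeastI[of _ n]) (rule triangle_ge)
  show "triangle (tri_root n) \<le> n"
  proof (cases "tri_root n")
    case 0 then show ?thesis by simp
  next
    case (Suc s)
    then have "\<not> n < triangle (Suc s)" unfolding tri_root_def
      by (metis lessI not_less_Least)
    then show ?thesis using Suc by simp
  qed
qed

lemma prod_decode_tri: "prod_decode n = (n - triangle (tri_root n), tri_root n - (n - triangle (tri_root n)))"
proof -
  let ?s = "tri_root n" let ?m = "n - triangle ?s"
  have n: "n = triangle ?s + ?m" using tri_root_props(1)[of n] by simp
  have "?m \<le> ?s" using tri_root_props[of n] by simp
  then have "prod_decode (triangle ?s + ?m) = (?m, ?s - ?m)"
    by (simp add: prod_decode_triangle_add prod_decode_aux.simps)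
  then show ?thesis using n by metis
qed

lemma PRD_tri_root1: "PRD 1 (\<lambda>xs. tri_root (hd xs))"
proof -
  let ?h = "\<lambda>ys. if ys!0 < triangle (Suc (ys!1)) then 0 else (1::nat)"
  have "PRD 1 (\<lambda>xs. LEAST q. ?h (xs @ [q]) = 0)"
  proof (rule PRD_mu2[where m=2 and k=1])
    show "PRD 2 ?h"
      by (intro PRD_if PRP_less PRD_tri PRD_Suc PRD_proj PRD_const) auto
    fix xs :: "nat list" assume "length xs = 1"
    then show "\<exists>y. ?h (xs @ [y]) = 0"
      using triangle_ge by (intro exI[of _ "xs!0"]) (auto simp: nth_append)
  qed simp
  then show ?thesis
    by (rule PRD_cong) (auto simp: tri_root_def length_Suc_conv)
qed

lemma PRD_fst: "PRD k f \<Longrightarrow> PRD k (\<lambda>xs. fst (prod_decode (f xs)))"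
  unfolding prod_decode_tri fst_conv
  by (intro PRD_sub PRD_tri PRD_comp1[OF PRD_tri_root1, simplified])

lemma PRD_snd: "PRD k f \<Longrightarrow> PRD k (\<lambda>xs. snd (prod_decode (f xs)))"
  unfolding prod_decode_tri snd_conv
  by (intro PRD_sub PRD_tri PRD_comp1[OF PRD_tri_root1, simplified])




definition ncons :: "nat \<Rightarrow> nat \<Rightarrow> nat" where "ncons h t = Suc (prod_encode (h, t))"
definition nhd :: "nat \<Rightarrow> nat" where "nhd n = fst (prod_decode (n - 1))"
definition ntl :: "nat \<Rightarrow> nat" where "ntl n = snd (prod_decode (n - 1))"

lemma prod_decode_0[simp]: "prod_decode 0 = (0, 0)"
  by (simp add: prod_decode_def prod_decode_aux.simps)

lemma nhd_ncons[simp]: "nhd (ncons h t) = h" and ntl_ncons[simp]: "ntl (ncons h t) = t"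
  and nhd_0[simp]: "nhd 0 = 0" and ntl_0[simp]: "ntl 0 = 0"
  and ncons_nz[simp]: "ncons h t \<noteq> 0"
  by (auto simp: nhd_def ntl_def ncons_def)

primrec lcode :: "nat list \<Rightarrow> nat" where
  "lcode [] = 0" | "lcode (x # xs) = ncons x (lcode xs)"

lemma lcode_0_iff[simp]: "lcode l = 0 \<longleftrightarrow> l = []"
  by (cases l) auto

lemma lcode_ge: "length l \<le> lcode l"
proof (induction l)
  case (Cons x l)
  have "lcode l \<le> prod_encode (x, lcode l)" by (rule le_prod_encode_2)
  then show ?case using Cons by (simp add: ncons_def)
qed simp

fun scode :: "sym \<Rightarrow> nat" where "scode None = 0" | "scode (Some a) = Suc a"
fun sdec :: "nat \<Rightarrow> sym" where "sdec 0 = None" | "sdec (Suc a) = Some a"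
lemma sdec_scode[simp]: "sdec (scode a) = a" by (cases a) auto

definition tcode :: "sym list \<Rightarrow> nat" where "tcode l = lcode (map scode l)"

lemma tcode_simps[simp]: "tcode [] = 0" "tcode (x # l) = ncons (scode x) (tcode l)"
  by (auto simp: tcode_def)

lemma tcode_0_iff[simp]: "tcode l = 0 \<longleftrightarrow> l = []"
  by (simp add: tcode_def)

definition mk :: "nat \<Rightarrow> nat \<Rightarrow> nat \<Rightarrow> nat \<Rightarrow> nat" where
  "mk sr a t q = prod_encode (prod_encode (sr, a), prod_encode (t, q))"
definition c_sr :: "nat \<Rightarrow> nat" where "c_sr c = fst (prod_decode (fst (prod_decode c)))"
definition c_a :: "nat \<Rightarrow> nat" where "c_a c = snd (prod_decode (fst (prod_decode c)))"
definition c_t :: "nat \<Rightarrow> nat" where "c_t c = fst (prod_decode (snd (prod_decode c)))"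
definition c_q :: "nat \<Rightarrow> nat" where "c_q c = snd (prod_decode (snd (prod_decode c)))"

lemma c_mk[simp]: "c_sr (mk sr a t q) = sr" "c_a (mk sr a t q) = a" "c_t (mk sr a t q) = t"
  "c_q (mk sr a t q) = q"
  by (auto simp: mk_def c_sr_def c_a_def c_t_def c_q_def)

definition ccode :: "config \<Rightarrow> nat" where
  "ccode cfg = (case cfg of (s, a, t, q) \<Rightarrow> mk (tcode (rev s)) (scode a) (tcode t) q)"

definition Sig :: "ptm \<Rightarrow> sym set" where "Sig M = insert None (Some ` alphabet M)"

fun mcode :: "move \<Rightarrow> nat" where
  "mcode MLeft = 0" | "mcode MRight = 1" | "mcode MStay = 2"

definition tkeys :: "ptm \<Rightarrow> nat set" where
  "tkeys M = (\<lambda>(b, q, a). prod_encode (b, prod_encode (q, scode a))) ` ({0, 1} \<times> (states M - finals M) \<times> Sig M)"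

definition tdelta :: "ptm \<Rightarrow> nat \<Rightarrow> nat \<times> sym \<times> move" where
  "tdelta M n = (if fst (prod_decode n) = 1 then delta1 M else delta0 M)
      (fst (prod_decode (snd (prod_decode n)))) (sdec (snd (prod_decode (snd (prod_decode n)))))"

definition tq :: "ptm \<Rightarrow> nat \<Rightarrow> nat" where "tq M n = (if n \<in> tkeys M then fst (tdelta M n) else 0)"
definition ta :: "ptm \<Rightarrow> nat \<Rightarrow> nat" where "ta M n = (if n \<in> tkeys M then scode (fst (snd (tdelta M n))) else 0)"
definition tm :: "ptm \<Rightarrow> nat \<Rightarrow> nat" where "tm M n = (if n \<in> tkeys M then mcode (snd (snd (tdelta M n))) else 0)"
definition fin :: "ptm \<Rightarrow> nat \<Rightarrow> nat" where "fin M q = (if q \<in> finals M then 1 else 0)"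

definition ckey :: "nat \<Rightarrow> nat \<Rightarrow> nat" where "ckey b c = prod_encode (b, prod_encode (c_q c, c_a c))"

definition stepc :: "ptm \<Rightarrow> nat \<Rightarrow> nat \<Rightarrow> nat" where
  "stepc M b c = (if fin M (c_q c) = 1 then c else
     (if tm M (ckey b c) = 2 then mk (c_sr c) (ta M (ckey b c)) (c_t c) (tq M (ckey b c))
      else if tm M (ckey b c) = 1 then
        mk (ncons (ta M (ckey b c)) (c_sr c)) (nhd (c_t c)) (ntl (c_t c)) (tq M (ckey b c))
      else if c_sr c = 0 then mk 0 0 (ncons (ta M (ckey b c)) (c_t c)) (tq M (ckey b c))
      else mk (ntl (c_sr c)) (nhd (c_sr c)) (ncons (ta M (ckey b c)) (c_t c)) (tq M (ckey b c))))"

definition cinv :: "ptm \<Rightarrow> config \<Rightarrow> bool" where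
  "cinv M cfg = (case cfg of (s, a, t, q) \<Rightarrow> q \<in> states M \<and> set s \<subseteq> Sig M \<and> a \<in> Sig M \<and> set t \<subseteq> Sig M)"

lemma rev_nonempty: "s \<noteq> [] \<Longrightarrow> rev s = last s # rev (butlast s)"
  by (metis append_butlast_last_id rev_eq_Cons_iff rev_rev_ident)

lemma step_correct:
  assumes wf: "wf_ptm M" and I: "cinv M cfg"
  shows "stepc M (if b then 1 else 0) (ccode cfg) = ccode (step M b cfg) \<and> cinv M (step M b cfg)"
proof -
  obtain s a t q where cfg: "cfg = (s, a, t, q)" by (cases cfg) auto
  have I': "q \<in> states M" "set s \<subseteq> Sig M" "a \<in> Sig M" "set t \<subseteq> Sig M"
    using I by (auto simp: cinv_def cfg)
  show ?thesis
  proof (cases "q \<in> finals M")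
    case True
    then show ?thesis using I by (simp add: cfg stepc_def ccode_def fin_def)
  next
    case False
    let ?bb = "if b then 1 else 0 :: nat"
    let ?k = "ckey ?bb (ccode cfg)"
    have k: "?k = prod_encode (?bb, prod_encode (q, scode a))"
      by (simp add: ckey_def ccode_def cfg)
    have kin: "?k \<in> tkeys M" unfolding k tkeys_def using False I'
      by (intro image_eqI[of _ _ "(?bb, q, a)"]) auto
    obtain q' a' m where d: "(if b then delta1 M else delta0 M) q a = (q', a', m)"
      by (metis prod_cases3)
    have td: "tdelta M ?k = (q', a', m)" unfolding k tdelta_def using d by (cases b) auto
    have dom: "q' \<in> states M \<and> a' \<in> Sig M"
    proof -
      have "\<forall>q\<in>states M - finals M. \<forall>a\<in>Sig M. delta0 M q a \<in> states M \<times> Sig M \<times> UNIV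
          \<and> delta1 M q a \<in> states M \<times> Sig M \<times> UNIV"
        using wf unfolding wf_ptm_def Sig_def by blast
      then have "delta0 M q a \<in> states M \<times> Sig M \<times> UNIV \<and> delta1 M q a \<in> states M \<times> Sig M \<times> UNIV"
        using False I' by blast
      then show ?thesis using d by (cases b) auto
    qed
    have tv: "tq M ?k = q'" "ta M ?k = scode a'" "tm M ?k = mcode m"
      using kin td by (auto simp: tq_def ta_def tm_def)
    have st: "step M b cfg = apply_move s a' t q' m"
      using False d by (simp add: cfg)
    have nf: "fin M (c_q (ccode cfg)) \<noteq> 1" using False by (simp add: fin_def ccode_def cfg)
    show ?thesis
    proof (cases m)
      case MStay
      then show ?thesis using nf tv st dom I'
        by (simp add: stepc_def ccode_def cfg cinv_def)
    next
      case MRight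
      then show ?thesis using nf tv st dom I'
        by (cases t) (auto simp: stepc_def ccode_def cfg cinv_def Sig_def)
    next
      case MLeft
      show ?thesis
      proof (cases "s = []")
        case True
        then show ?thesis using MLeft nf tv st dom I'
          by (simp add: stepc_def ccode_def cfg cinv_def Sig_def)
      next
        case False
        have r: "tcode (rev s) = ncons (scode (last s)) (tcode (rev (butlast s)))"
          by (simp only: rev_nonempty[OF False] tcode_simps)
        have "last s \<in> Sig M" "set (butlast s) \<subseteq> Sig M" using I' False
          by (auto dest: in_set_butlastD)
        then show ?thesis using MLeft nf tv st dom I' False r
          by (simp add: stepc_def ccode_def cfg cinv_def)
      qed
    qed
  qed
qed




lemma PRD_finsupp_aux:
  assumes "finite S" "PRD k g"
  shows "PRD k (\<lambda>xs. \<Sum>c\<in>S. (if g xs = c then f c else 0))"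
  using assms(1)
proof (induction S)
  case empty then show ?case by (simp add: PRD_const)
next
  case (insert c S)
  show ?case unfolding sum.insert[OF insert.hyps]
    by (intro PRD_add PRD_if PRP_eq assms(2) PRD_const insert.IH)
qed

lemma PRD_finsupp:
  assumes "finite S" "\<And>n. n \<notin> S \<Longrightarrow> f n = 0" "PRD k g"
  shows "PRD k (\<lambda>xs. f (g xs))"
proof -
  have "(\<Sum>c\<in>S. (if n = c then f c else 0)) = f n" for n
    using assms(1,2) by (cases "n \<in> S") (auto simp: sum.delta)
  then show ?thesis using PRD_finsupp_aux[OF assms(1,3), of f] by simp
qed

lemma finite_Sig: "wf_ptm M \<Longrightarrow> finite (Sig M)"
  by (simp add: wf_ptm_def Sig_def)

lemma finite_tkeys: "wf_ptm M \<Longrightarrow> finite (tkeys M)"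
  unfolding tkeys_def using finite_Sig[of M]
  by (intro finite_imageI finite_cartesian_product) (auto simp: wf_ptm_def)

lemma PRD_tq: "wf_ptm M \<Longrightarrow> PRD k g \<Longrightarrow> PRD k (\<lambda>xs. tq M (g xs))"
  by (rule PRD_finsupp[OF finite_tkeys]) (auto simp: tq_def)
lemma PRD_ta: "wf_ptm M \<Longrightarrow> PRD k g \<Longrightarrow> PRD k (\<lambda>xs. ta M (g xs))"
  by (rule PRD_finsupp[OF finite_tkeys]) (auto simp: ta_def)
lemma PRD_tm: "wf_ptm M \<Longrightarrow> PRD k g \<Longrightarrow> PRD k (\<lambda>xs. tm M (g xs))"
  by (rule PRD_finsupp[OF finite_tkeys]) (auto simp: tm_def)
lemma PRD_fin: "wf_ptm M \<Longrightarrow> PRD k g \<Longrightarrow> PRD k (\<lambda>xs. fin M (g xs))"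
  by (rule PRD_finsupp[of "finals M"]) (auto simp: fin_def wf_ptm_def intro: finite_subset)

lemma PRD_ncons: "PRD k f \<Longrightarrow> PRD k g \<Longrightarrow> PRD k (\<lambda>xs. ncons (f xs) (g xs))"
  unfolding ncons_def by (intro PRD_Suc PRD_enc)
lemma PRD_nhd: "PRD k f \<Longrightarrow> PRD k (\<lambda>xs. nhd (f xs))"
  unfolding nhd_def by (intro PRD_fst PRD_pred)
lemma PRD_ntl: "PRD k f \<Longrightarrow> PRD k (\<lambda>xs. ntl (f xs))"
  unfolding ntl_def by (intro PRD_snd PRD_pred)
lemma PRD_mk: "PRD k a \<Longrightarrow> PRD k b \<Longrightarrow> PRD k c \<Longrightarrow> PRD k d \<Longrightarrow> PRD k (\<lambda>xs. mk (a xs) (b xs) (c xs) (d xs))"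
  unfolding mk_def by (intro PRD_enc)
lemma PRD_c_sr: "PRD k f \<Longrightarrow> PRD k (\<lambda>xs. c_sr (f xs))" unfolding c_sr_def by (intro PRD_fst)
lemma PRD_c_a: "PRD k f \<Longrightarrow> PRD k (\<lambda>xs. c_a (f xs))" unfolding c_a_def by (intro PRD_fst PRD_snd)
lemma PRD_c_t: "PRD k f \<Longrightarrow> PRD k (\<lambda>xs. c_t (f xs))" unfolding c_t_def by (intro PRD_fst PRD_snd)
lemma PRD_c_q: "PRD k f \<Longrightarrow> PRD k (\<lambda>xs. c_q (f xs))" unfolding c_q_def by (intro PRD_snd)
lemma PRD_ckey: "PRD k f \<Longrightarrow> PRD k g \<Longrightarrow> PRD k (\<lambda>xs. ckey (f xs) (g xs))"
  unfolding ckey_def by (intro PRD_enc PRD_c_q PRD_c_a)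

lemma PRD_stepc: "wf_ptm M \<Longrightarrow> PRD k f \<Longrightarrow> PRD k g \<Longrightarrow> PRD k (\<lambda>xs. stepc M (f xs) (g xs))"
  unfolding stepc_def
  by (intro PRD_if PRP_eq PRD_fin PRD_c_q PRD_tm PRD_ckey PRD_mk PRD_c_sr PRD_c_t PRD_ta PRD_tq
        PRD_ncons PRD_nhd PRD_ntl PRD_const; assumption)




definition tup4 :: "nat \<Rightarrow> nat \<Rightarrow> nat \<Rightarrow> nat \<Rightarrow> nat" where
  "tup4 a b c d = prod_encode (a, prod_encode (b, prod_encode (c, d)))"
definition p1 :: "nat \<Rightarrow> nat" where "p1 S = fst (prod_decode S)"
definition p2 :: "nat \<Rightarrow> nat" where "p2 S = fst (prod_decode (snd (prod_decode S)))"
definition p3 :: "nat \<Rightarrow> nat" where "p3 S = fst (prod_decode (snd (prod_decode (snd (prod_decode S)))))"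
definition p4 :: "nat \<Rightarrow> nat" where "p4 S = snd (prod_decode (snd (prod_decode (snd (prod_decode S)))))"

lemma p_tup4[simp]: "p1 (tup4 a b c d) = a" "p2 (tup4 a b c d) = b" "p3 (tup4 a b c d) = c" "p4 (tup4 a b c d) = d"
  by (auto simp: tup4_def p1_def p2_def p3_def p4_def)

lemma PRD_tup4: "PRD k a \<Longrightarrow> PRD k b \<Longrightarrow> PRD k c \<Longrightarrow> PRD k d \<Longrightarrow> PRD k (\<lambda>xs. tup4 (a xs) (b xs) (c xs) (d xs))"
  unfolding tup4_def by (intro PRD_enc)
lemma PRD_p1: "PRD k f \<Longrightarrow> PRD k (\<lambda>xs. p1 (f xs))" unfolding p1_def by (intro PRD_fst)
lemma PRD_p2: "PRD k f \<Longrightarrow> PRD k (\<lambda>xs. p2 (f xs))" unfolding p2_def by (intro PRD_fst PRD_snd)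
lemma PRD_p3: "PRD k f \<Longrightarrow> PRD k (\<lambda>xs. p3 (f xs))" unfolding p3_def by (intro PRD_fst PRD_snd)
lemma PRD_p4: "PRD k f \<Longrightarrow> PRD k (\<lambda>xs. p4 (f xs))" unfolding p4_def by (intro PRD_snd)

lemma PRD_iter2:
  assumes "PRD (Suc k) (\<lambda>ys. st (ys ! k))" "PRD k f" "PRD k n"
  shows "PRD k (\<lambda>xs. (st ^^ n xs) (f xs))"
proof -
  have "PRD k (\<lambda>xs. ((\<lambda>acc. (\<lambda>ys. st (ys ! k)) (xs @ [acc])) ^^ n xs) (f xs))"
    using assms by (intro PRD_iter) auto
  then show ?thesis
  proof (rule PRD_cong)
    fix xs :: "nat list" assume "length xs = k"
    then have "(\<lambda>acc. (\<lambda>ys. st (ys ! k)) (xs @ [acc])) = st" by (auto simp: nth_append)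
    then show "((\<lambda>acc. (\<lambda>ys. st (ys ! k)) (xs @ [acc])) ^^ n xs) (f xs) = (st ^^ n xs) (f xs)" by simp
  qed
qed

lemma PRD_foldr:
  assumes F: "\<And>a b. PRD k a \<Longrightarrow> PRD k b \<Longrightarrow> PRD k (\<lambda>xs. F (a xs) (b xs))"
  shows "PRD k (\<lambda>xs. foldr F xs c)"
proof -
  have "j \<le> k \<Longrightarrow> PRD k (\<lambda>xs. foldr F (drop (k - j) xs) c)" for j
  proof (induction j)
    case 0
    show ?case by (rule PRD_cong[OF PRD_const[of k c]]) simp
  next
    case (Suc j)
    have "PRD k (\<lambda>xs. F (xs ! (k - Suc j)) (foldr F (drop (k - j) xs) c))"
      using Suc by (intro F PRD_proj) auto
    then show ?case
    proof (rule PRD_cong)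
      fix xs :: "nat list" assume l: "length xs = k"
      have "drop (k - Suc j) xs = xs ! (k - Suc j) # drop (Suc (k - Suc j)) xs"
        using l Suc.prems by (intro Cons_nth_drop_Suc[symmetric]) auto
      moreover have "Suc (k - Suc j) = k - j" using Suc.prems by simp
      ultimately show "F (xs ! (k - Suc j)) (foldr F (drop (k - j) xs) c) = foldr F (drop (k - Suc j) xs) c"
        by simp
    qed
  qed
  from this[of k] show ?thesis by simp
qed

section \<open>Choice sequences\<close>

fun chs :: "nat \<Rightarrow> bool list" where
  "chs n = (if n \<le> 1 then [] else odd n # chs (n div 2))"

declare chs.simps[simp del]

lemma length_chs: "1 \<le> m \<Longrightarrow> length (chs m) < m"
proof (induction m rule: chs.induct)
  case (1 n)
  show ?case
  proof (cases "n \<le> 1")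
    case True then show ?thesis using 1 by (simp add: chs.simps)
  next
    case False
    then have "length (chs (n div 2)) < n div 2" using 1 by auto
    then show ?thesis using False by (subst chs.simps) simp
  qed
qed

section \<open>Simulation\<close>

definition simstep :: "ptm \<Rightarrow> nat \<Rightarrow> nat" where
  "simstep M S = (if p2 S \<le> 1 then S else
     tup4 (stepc M (p2 S mod 2) (p1 S)) (p2 S div 2) (p3 S + fin M (c_q (p1 S))) (Suc (p4 S)))"

lemma run_Cons: "run M (b # bs) c = run M bs (step M b c)"
  by (simp add: run_def)

lemma run_Nil: "run M [] c = c" by (simp add: run_def)

lemma inv_run: "wf_ptm M \<Longrightarrow> cinv M c \<Longrightarrow> cinv M (run M bs c)"
  by (induction bs arbitrary: c) (auto simp: run_Nil run_Cons step_correct)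

lemma fin_ccode: "fin M (c_q (ccode cfg)) = (if is_final M cfg then 1 else 0)"
  by (cases cfg) (auto simp: fin_def ccode_def is_final_def)

lemma funpow_fix: "f x = x \<Longrightarrow> (f ^^ n) x = x"
  by (induction n) auto

lemma sim_correct:
  assumes wf: "wf_ptm M"
  shows "cinv M cfg \<Longrightarrow> 1 \<le> m \<Longrightarrow> length (chs m) \<le> n \<Longrightarrow>
    \<exists>b'. (simstep M ^^ n) (tup4 (ccode cfg) m bad L) = tup4 (ccode (run M (chs m) cfg)) 1 b' (L + length (chs m))
      \<and> (b' = 0 \<longleftrightarrow> bad = 0 \<and> (\<forall>i<length (chs m). \<not> is_final M (run M (take i (chs m)) cfg)))"
proof (induction n arbitrary: cfg m bad L)
  case 0
  then have "chs m = []" by simp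
  then have "m = 1" using 0 by (subst (asm) chs.simps) (auto split: if_splits)
  then show ?case using \<open>chs m = []\<close> by (auto simp: run_Nil)
next
  case (Suc n)
  show ?case
  proof (cases "m \<le> 1")
    case True
    then have m1: "m = 1" using Suc by simp
    then have c: "chs m = []" by (simp add: chs.simps)
    have fx: "simstep M (tup4 (ccode cfg) m bad L) = tup4 (ccode cfg) m bad L"
      using m1 by (simp add: simstep_def)
    show ?thesis unfolding funpow_fix[where f="simstep M" and x="tup4 (ccode cfg) m bad L", OF fx] using m1 c by (auto simp: run_Nil)
  next
    case False
    have cm: "chs m = odd m # chs (m div 2)" using False by (subst chs.simps) simp
    have bit: "m mod 2 = (if odd m then 1 else 0)" by (simp add: odd_iff_mod_2_eq_one)
    let ?c' = "step M (odd m) cfg"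
    have sc: "stepc M (m mod 2) (ccode cfg) = ccode ?c'" and iv: "cinv M ?c'"
      using step_correct[OF wf Suc.prems(1), of "odd m"] bit by auto
    have one: "simstep M (tup4 (ccode cfg) m bad L) =
       tup4 (ccode ?c') (m div 2) (bad + (if is_final M cfg then 1 else 0)) (Suc L)"
      using False sc by (simp add: simstep_def fin_ccode)
    have "length (chs (m div 2)) \<le> n" using Suc.prems(3) cm by simp
    moreover have "1 \<le> m div 2" using False by simp
    ultimately obtain b' where b': "(simstep M ^^ n) (tup4 (ccode ?c') (m div 2) (bad + (if is_final M cfg then 1 else 0)) (Suc L))
        = tup4 (ccode (run M (chs (m div 2)) ?c')) 1 b' (Suc L + length (chs (m div 2)))"
      "b' = 0 \<longleftrightarrow> bad + (if is_final M cfg then 1 else 0) = 0 \<and>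
         (\<forall>i<length (chs (m div 2)). \<not> is_final M (run M (take i (chs (m div 2))) ?c'))"
      using Suc.IH[OF iv] by blast
    have "(simstep M ^^ Suc n) (tup4 (ccode cfg) m bad L) = tup4 (ccode (run M (chs m) cfg)) 1 b' (L + length (chs m))"
      by (simp only: funpow_Suc_right o_apply one b'(1)) (simp add: cm run_Cons)
    moreover have "(\<forall>i<length (chs m). \<not> is_final M (run M (take i (chs m)) cfg)) \<longleftrightarrow>
       \<not> is_final M cfg \<and> (\<forall>i<length (chs (m div 2)). \<not> is_final M (run M (take i (chs (m div 2))) ?c'))"
    proof -
      have "(\<forall>i<length (chs m). P i) \<longleftrightarrow> P 0 \<and> (\<forall>i<length (chs (m div 2)). P (Suc i))" for P
        using cm by (simp add: All_less_Suc2)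
      then show ?thesis by (simp add: cm run_Cons run_Nil)
    qed
    ultimately show ?thesis using b'(2) by auto
  qed
qed




section \<open>Output decoding\<close>

definition dstep :: "nat \<Rightarrow> nat" where
  "dstep S = (if p1 S = 0 then S else
     tup4 (ntl (p1 S)) (p2 S + (nhd (p1 S) - 1) * p3 S) (2 * p3 S)
       (if nhd (p1 S) = 1 \<or> nhd (p1 S) = 2 then p4 S else 0))"

definition dfin :: "nat \<Rightarrow> nat" where "dfin r = (dstep ^^ r) (tup4 r 0 1 1)"
definition decode :: "nat \<Rightarrow> nat" where
  "decode r = (if p4 (dfin r) = 1 then p2 (dfin r) + p3 (dfin r) else 0)"

fun dv :: "sym list \<Rightarrow> nat option" where
  "dv [] = Some 1"
| "dv (Some 0 # l) = map_option (\<lambda>v. 2 * v) (dv l)"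
| "dv (Some (Suc 0) # l) = map_option (\<lambda>v. 2 * v + 1) (dv l)"
| "dv _ = None"

primrec dval :: "sym list \<Rightarrow> nat" where
  "dval [] = 0" | "dval (x # l) = (scode x - 1) + 2 * dval l"

definition valid :: "sym list \<Rightarrow> bool" where "valid l \<longleftrightarrow> set l \<subseteq> {Some 0, Some 1}"

lemma dv_valid: "dv l = (if valid l then Some (2 ^ length l + dval l) else None)"
proof (induction l rule: dv.induct)
  case (2 l) then show ?case by (auto simp: valid_def)
next
  case (3 l) then show ?case by (auto simp: valid_def)
qed (auto simp: valid_def)

lemma dv_bin: "dv (rev (bits (bin y))) = Some (Suc y)"
proof (induction y rule: bin.induct)
  case 1 then show ?case by (simp add: bits_def)
next
  case (2 n)
  have r: "rev (bits (bin (Suc n))) = Some (n mod 2) # rev (bits (bin (n div 2)))"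
    by (simp add: bits_def)
  have IH: "dv (rev (bits (bin (n div 2)))) = Some (Suc (n div 2))" by (rule 2)
  show ?case
  proof (cases "n mod 2 = 0")
    case True
    then have "n = 2 * (n div 2)" using div_mult_mod_eq[of n 2] by simp
    then show ?thesis unfolding r using True IH by simp
  next
    case False
    then have m: "n mod 2 = Suc 0" by simp
    then have "n = 2 * (n div 2) + 1" using div_mult_mod_eq[of n 2] by simp
    then show ?thesis unfolding r m using IH by simp
  qed
qed

lemma dv_inv: "dv l = Some v \<Longrightarrow> 1 \<le> v \<and> l = rev (bits (bin (v - 1)))"
proof (induction l arbitrary: v rule: dv.induct)
  case 1 then show ?case by (simp add: bits_def)
next
  case (2 l)
  then obtain w where w: "dv l = Some w" "v = 2 * w" by auto
  with 2 have "1 \<le> w" "l = rev (bits (bin (w - 1)))" by auto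
  moreover have "bin (2 * w - 1) = bin (w - 1) @ [0]"
  proof -
    have "2 * w - 1 = Suc (2 * w - 2)" using \<open>1 \<le> w\<close> by simp
    moreover have "(2 * w - 2) div 2 = w - 1" "(2 * w - 2) mod 2 = 0" by auto
    ultimately show ?thesis by simp
  qed
  ultimately show ?case using w by (simp add: bits_def)
next
  case (3 l)
  then obtain w where w: "dv l = Some w" "v = 2 * w + 1" by auto
  with 3 have "1 \<le> w" "l = rev (bits (bin (w - 1)))" by auto
  moreover have "bin (2 * w) = bin (w - 1) @ [1]"
  proof -
    have "2 * w = Suc (2 * w - 1)" using \<open>1 \<le> w\<close> by simp
    moreover have "(2 * w - 1) div 2 = w - 1" "(2 * w - 1) mod 2 = 1" using \<open>1 \<le> w\<close> by (cases w; simp)+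
    ultimately show ?thesis by (metis bin.simps(2))
  qed
  ultimately show ?case using w by (simp add: bits_def)
qed auto

lemma dstep_iter: "length l \<le> n \<Longrightarrow>
  (dstep ^^ n) (tup4 (tcode l) acc p ok) = tup4 0 (acc + p * dval l) (p * 2 ^ length l) (if valid l then ok else 0)"
proof (induction n arbitrary: l acc p ok)
  case 0 then show ?case by (simp add: valid_def)
next
  case (Suc n)
  show ?case
  proof (cases l)
    case Nil
    have fx: "dstep (tup4 (tcode l) acc p ok) = tup4 (tcode l) acc p ok" using Nil by (simp add: dstep_def)
    show ?thesis unfolding funpow_fix[where f=dstep and x="tup4 (tcode l) acc p ok", OF fx]
      using Nil by (simp add: valid_def)
  next
    case (Cons x l')
    have one: "dstep (tup4 (tcode l) acc p ok) = tup4 (tcode l') (acc + (scode x - 1) * p) (2 * p)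
        (if scode x = 1 \<or> scode x = 2 then ok else 0)"
      using Cons by (simp add: dstep_def)
    have v: "valid (x # l') \<longleftrightarrow> (scode x = 1 \<or> scode x = 2) \<and> valid l'"
      by (cases x) (auto simp: valid_def)
    show ?thesis
      unfolding funpow_Suc_right o_apply one
      using Suc.prems Cons by (subst Suc.IH) (auto simp: v algebra_simps)
  qed
qed

lemma decode_tcode: "decode (tcode l) = (case dv l of Some v \<Rightarrow> v | None \<Rightarrow> 0)"
proof -
  have "length l \<le> tcode l" unfolding tcode_def using lcode_ge[of "map scode l"] by simp
  then have "dfin (tcode l) = tup4 0 (dval l) (2 ^ length l) (if valid l then 1 else 0)"
    unfolding dfin_def by (simp add: dstep_iter)
  then show ?thesis by (simp add: decode_def dv_valid)
qed

lemma decode_eq: "decode (tcode (rev s)) = Suc y \<longleftrightarrow> s = bits (bin y)"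
proof
  assume a: "decode (tcode (rev s)) = Suc y"
  then obtain v where "dv (rev s) = Some v" "v = Suc y"
    unfolding decode_tcode by (auto split: option.splits)
  then show "s = bits (bin y)" using dv_inv by fastforce
next
  assume "s = bits (bin y)"
  then show "decode (tcode (rev s)) = Suc y" by (simp add: decode_tcode dv_bin)
qed

lemma PRD_decode: "PRD k f \<Longrightarrow> PRD k (\<lambda>xs. decode (f xs))"
proof -
  assume f: "PRD k f"
  have st: "PRD (Suc k) (\<lambda>ys. dstep (ys ! k))"
    unfolding dstep_def
    by (intro PRD_if PRP_eq PRP_disj PRD_p1 PRD_p2 PRD_p3 PRD_p4 PRD_proj PRD_tup4 PRD_ntl PRD_nhd
        PRD_add PRD_mult PRD_sub PRD_const) auto
  have "PRD k (\<lambda>xs. (dstep ^^ f xs) (tup4 (f xs) 0 1 1))"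
    by (intro PRD_iter2[OF st] PRD_tup4 f PRD_const)
  then have d: "PRD k (\<lambda>xs. dfin (f xs))" by (simp add: dfin_def)
  show ?thesis unfolding decode_def
    by (intro PRD_if PRP_eq PRD_p4 PRD_p2 PRD_p3 PRD_add d PRD_const)
qed

section \<open>Input encoding\<close>

primrec prep :: "sym list \<Rightarrow> nat \<Rightarrow> nat" where
  "prep [] T = T" | "prep (a # l) T = ncons (scode a) (prep l T)"

lemma tcode_append: "tcode (l1 @ l2) = prep l1 (tcode l2)"
  by (induction l1) auto

lemma prep_append: "prep (l1 @ l2) T = prep l1 (prep l2 T)"
  by (induction l1) auto

definition dbl :: "nat list \<Rightarrow> nat list" where "dbl l = concat (map (\<lambda>b. [b, b]) l)"

definition PB :: "nat \<Rightarrow> nat \<Rightarrow> nat" where "PB x T = prep (bits (dbl (bin x))) T"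

lemma PB_0: "PB 0 T = T" by (simp add: PB_def dbl_def bits_def)

lemma PB_Suc: "PB (Suc n) T = PB (n div 2) (ncons (Suc (n mod 2)) (ncons (Suc (n mod 2)) T))"
  by (simp add: PB_def dbl_def bits_def prep_append)

definition pbstep :: "nat \<Rightarrow> nat" where
  "pbstep S = (if fst (prod_decode S) = 0 then S else
     prod_encode ((fst (prod_decode S) - 1) div 2,
       ncons (Suc ((fst (prod_decode S) - 1) mod 2)) (ncons (Suc ((fst (prod_decode S) - 1) mod 2)) (snd (prod_decode S)))))"

lemma pb_iter: "x \<le> n \<Longrightarrow> (pbstep ^^ n) (prod_encode (x, T)) = prod_encode (0, PB x T)"
proof (induction n arbitrary: x T)
  case 0 then show ?case by (simp add: PB_0)
next
  case (Suc n)
  show ?case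
  proof (cases x)
    case 0
    have fx: "pbstep (prod_encode (x, T)) = prod_encode (x, T)" using 0 by (simp add: pbstep_def)
    show ?thesis unfolding funpow_fix[where f=pbstep and x="prod_encode (x, T)", OF fx]
      using 0 by (simp add: PB_0)
  next
    case (Suc x')
    have one: "pbstep (prod_encode (x, T)) = prod_encode (x' div 2, ncons (Suc (x' mod 2)) (ncons (Suc (x' mod 2)) T))"
      using Suc by (simp add: pbstep_def)
    show ?thesis unfolding funpow_Suc_right o_apply one
      using Suc.prems Suc by (subst Suc.IH) (auto simp: PB_Suc)
  qed
qed

lemma PRD_PB: "PRD k a \<Longrightarrow> PRD k b \<Longrightarrow> PRD k (\<lambda>xs. PB (a xs) (b xs))"
proof -
  assume a: "PRD k a" and b: "PRD k b"
  have st: "PRD (Suc k) (\<lambda>ys. pbstep (ys ! k))"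
    unfolding pbstep_def
    by (intro PRD_if PRP_eq PRD_fst PRD_snd PRD_proj PRD_enc PRD_ncons PRD_div PRD_mod PRD_Suc
        PRD_sub PRD_const) auto
  have "PRD k (\<lambda>xs. snd (prod_decode ((pbstep ^^ a xs) (prod_encode (a xs, b xs)))))"
    by (intro PRD_snd PRD_iter2[OF st] PRD_enc a b)
  then show ?thesis by (rule PRD_cong) (simp add: pb_iter)
qed

definition icode :: "nat list \<Rightarrow> nat" where "icode xs = tcode (bits (enc_tuple xs))"

lemma icode_foldr: "icode xs = foldr (\<lambda>x T. PB x (ncons 1 (ncons 2 T))) xs 0"
proof (induction xs)
  case Nil then show ?case by (simp add: icode_def enc_tuple_def bits_def)
next
  case (Cons x xs)
  have "icode (x # xs) = tcode (bits (dbl (bin x) @ [0, 1]) @ bits (enc_tuple xs))"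
    by (simp add: icode_def enc_tuple_def bits_def dbl_def)
  also have "\<dots> = PB x (ncons 1 (ncons 2 (icode xs)))"
    by (simp add: tcode_append prep_append PB_def bits_def icode_def numeral_2_eq_2)
  finally show ?case using Cons by simp
qed

lemma PRD_icode: "PRD k icode"
proof -
  have "PRD k (\<lambda>xs. foldr (\<lambda>x T. PB x (ncons 1 (ncons 2 T))) xs 0)"
    by (rule PRD_foldr) (intro PRD_PB PRD_ncons PRD_const; assumption)
  then show ?thesis by (rule PRD_cong) (simp add: icode_foldr)
qed




definition c0 :: "ptm \<Rightarrow> nat list \<Rightarrow> nat" where
  "c0 M xs = mk 0 (nhd (icode xs)) (ntl (icode xs)) (start M)"
definition SIM :: "ptm \<Rightarrow> nat list \<Rightarrow> nat \<Rightarrow> nat" where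
  "SIM M xs z = (simstep M ^^ z) (tup4 (c0 M xs) (Suc z) 0 0)"
definition halt :: "ptm \<Rightarrow> nat list \<Rightarrow> nat \<Rightarrow> nat" where
  "halt M xs z = (if p3 (SIM M xs z) = 0 \<and> fin M (c_q (p1 (SIM M xs z))) = 1 \<and> c_t (p1 (SIM M xs z)) = 0 then 1 else 0)"
definition outv :: "ptm \<Rightarrow> nat list \<Rightarrow> nat \<Rightarrow> nat" where
  "outv M xs z = (if halt M xs z = 1 then decode (c_sr (p1 (SIM M xs z))) else 0)"
definition lenz :: "ptm \<Rightarrow> nat list \<Rightarrow> nat \<Rightarrow> nat" where
  "lenz M xs z = p4 (SIM M xs z)"

definition ech :: "nat \<Rightarrow> bool list" where "ech z = chs (Suc z)"

lemma ccode_initial: "ccode (initial M v) = mk 0 (nhd (tcode v)) (ntl (tcode v)) (start M)"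
  by (cases v) (auto simp: initial_def ccode_def)

lemma inv_initial: "wf_ptm M \<Longrightarrow> set v \<subseteq> Sig M \<Longrightarrow> cinv M (initial M v)"
  by (cases v) (auto simp: initial_def cinv_def wf_ptm_def Sig_def)

lemma set_bin: "set (bin x) \<subseteq> {0, 1}"
  by (induction x rule: bin.induct) auto

lemma set_enc: "set (enc_tuple xs) \<subseteq> {0, 1}"
  unfolding enc_tuple_def using set_bin by (auto simp: subset_iff)

lemma set_bits_enc: "wf_ptm M \<Longrightarrow> set (bits (enc_tuple xs)) \<subseteq> Sig M"
  using set_enc[of xs] unfolding bits_def Sig_def wf_ptm_def by auto

lemma sem:
  fixes xs :: "nat list" and z y :: nat
  assumes wf: "wf_ptm M"
  defines "v \<equiv> bits (enc_tuple xs)"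
  shows "halt M xs z = (if \<exists>u. halts_with M v (ech z) u then 1 else 0)"
    and "lenz M xs z = length (ech z)"
    and "outv M xs z = Suc y \<longleftrightarrow> halts_with M v (ech z) (bits (bin y))"
proof -
  have iv: "cinv M (initial M v)" using inv_initial[OF wf set_bits_enc[OF wf]] by (simp add: v_def)
  have c0: "c0 M xs = ccode (initial M v)" by (simp add: c0_def ccode_initial v_def icode_def)
  have len: "length (chs (Suc z)) \<le> z" using length_chs[of "Suc z"] by simp
  obtain b' where b': "SIM M xs z = tup4 (ccode (run M (ech z) (initial M v))) 1 b' (0 + length (ech z))"
    "b' = 0 \<longleftrightarrow> 0 = (0::nat) \<and> (\<forall>i<length (ech z). \<not> is_final M (run M (take i (ech z)) (initial M v)))"
    using sim_correct[OF wf iv _ len, of 0 0] unfolding SIM_def c0 ech_def by auto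
  obtain s a t q where R: "run M (ech z) (initial M v) = (s, a, t, q)" by (metis prod_cases4)
  have hw: "halts_with M v (ech z) u \<longleftrightarrow> b' = 0 \<and> u = s \<and> t = [] \<and> q \<in> finals M" for u
    using b'(2) R unfolding halts_with_def by auto
  have h: "halt M xs z = (if b' = 0 \<and> q \<in> finals M \<and> t = [] then 1 else 0)"
    unfolding halt_def b'(1) using R by (simp add: ccode_def fin_def)
  show "halt M xs z = (if \<exists>u. halts_with M v (ech z) u then 1 else 0)"
    unfolding h hw by auto
  show "lenz M xs z = length (ech z)" unfolding lenz_def b'(1) by simp
  have o: "outv M xs z = (if b' = 0 \<and> q \<in> finals M \<and> t = [] then decode (tcode (rev s)) else 0)"
    unfolding outv_def h unfolding b'(1) using R by (simp add: ccode_def)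
  show "outv M xs z = Suc y \<longleftrightarrow> halts_with M v (ech z) (bits (bin y))"
    unfolding o hw using decode_eq by auto
qed

lemma PRD_SIM: "wf_ptm M \<Longrightarrow> PRD (Suc k) (\<lambda>ys. SIM M (take k ys) (ys ! k))"
proof -
  assume wf: "wf_ptm M"
  have st: "PRD (Suc (Suc k)) (\<lambda>ys. simstep M (ys ! Suc k))"
    unfolding simstep_def
    by (intro PRD_if PRP_le PRD_p1 PRD_p2 PRD_p3 PRD_p4 PRD_proj PRD_tup4 PRD_stepc[OF wf] PRD_mod
        PRD_div PRD_add PRD_fin[OF wf] PRD_c_q PRD_Suc PRD_const) auto
  have ic: "PRD (Suc k) (\<lambda>ys. icode (take k ys))" by (rule PRD_lift[OF PRD_icode]) simp
  have "PRD (Suc k) (\<lambda>ys. (simstep M ^^ (ys ! k)) (tup4 (c0 M (take k ys)) (Suc (ys ! k)) 0 0))"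
    unfolding c0_def
    by (intro PRD_iter2[OF st] PRD_tup4 PRD_mk PRD_nhd PRD_ntl ic PRD_Suc PRD_proj PRD_const) auto
  then show ?thesis by (simp add: SIM_def)
qed

lemma PRD_halt: "wf_ptm M \<Longrightarrow> PRD (Suc k) (\<lambda>ys. halt M (take k ys) (ys ! k))"
  unfolding halt_def
  by (intro PRD_if PRP_conj PRP_eq PRD_p3 PRD_fin PRD_c_q PRD_c_t PRD_p1 PRD_SIM PRD_const; assumption?)

lemma PRD_outv: "wf_ptm M \<Longrightarrow> PRD (Suc k) (\<lambda>ys. outv M (take k ys) (ys ! k))"
  unfolding outv_def
  by (intro PRD_if PRP_eq PRD_halt PRD_decode PRD_c_sr PRD_p1 PRD_SIM PRD_const; assumption?)

lemma PRD_lenz: "wf_ptm M \<Longrightarrow> PRD (Suc k) (\<lambda>ys. lenz M (take k ys) (ys ! k))"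
  unfolding lenz_def by (intro PRD_p4 PRD_SIM)




lemma half_pow_sums: "(\<lambda>j. (1/2::real) ^ Suc j) sums 1"
proof -
  have "(\<lambda>j. (1/2::real) ^ j) sums (1 / (1 - 1/2))" by (rule geometric_sums) simp
  then have "(\<lambda>j. (1/2) * (1/2::real) ^ j) sums ((1/2) * (1 / (1 - 1/2)))" by (rule sums_mult)
  then show ?thesis by simp
qed

lemma div_double: "(2 * X) div c = 2 * (X div c) + (2 * (X mod c)) div (c::nat)"
proof -
  have e: "X = c * (X div c) + X mod c" by simp
  have "2 * X = 2 * (c * (X div c) + X mod c)" using e by (rule arg_cong)
  then have "2 * X = c * (2 * (X div c)) + 2 * (X mod c)" by (simp only: distrib_left mult.left_commute)
  then have "(2 * X) div c = (c * (2 * (X div c)) + 2 * (X mod c)) div c" by simp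
  also have "\<dots> = 2 * (X div c) + (2 * (X mod c)) div c"
    by (cases "c = 0") simp_all
  finally show ?thesis .
qed

definition digit :: "nat \<Rightarrow> nat \<Rightarrow> nat \<Rightarrow> nat" where
  "digit a c j = ((2 ^ Suc j * a) div c) mod 2"

lemma digit_step:
  assumes "0 < c"
  shows "(2 ^ Suc n * a) div c = 2 * ((2 ^ n * a) div c) + digit a c n"
proof -
  let ?X = "2 ^ n * a"
  have e: "(2 * (?X mod c)) div c < 2" using assms by (simp add: less_mult_imp_div_less)
  have "(2 ^ Suc n * a) div c = 2 * (?X div c) + (2 * (?X mod c)) div c"
    using div_double[of ?X c] by (simp add: mult.assoc)
  moreover then have "digit a c n = (2 * (?X mod c)) div c"
    unfolding digit_def using e by simp
  ultimately show ?thesis by simp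
qed

lemma digit_le1: "0 < c \<Longrightarrow> digit a c j = 0 \<or> digit a c j = 1"
  by (auto simp: digit_def)

lemma binexp_partial:
  assumes "0 < c" "a < c"
  shows "(\<Sum>j<n. (1/2::real) ^ Suc j * (if digit a c j = 1 then 1 else 0)) = real ((2 ^ n * a) div c) / 2 ^ n"
proof (induction n)
  case 0 then show ?case using assms(2) by simp
next
  case (Suc n)
  have d: "real (digit a c n) = (if digit a c n = 1 then 1 else 0)" using digit_le1[OF assms(1), of a n] by auto
  have "(\<Sum>j<Suc n. (1/2::real) ^ Suc j * (if digit a c j = 1 then 1 else 0)) =
      real ((2 ^ n * a) div c) / 2 ^ n + (1/2) ^ Suc n * real (digit a c n)"
    using Suc d by simp
  also have "\<dots> = (2 * real ((2 ^ n * a) div c) + real (digit a c n)) / 2 ^ Suc n"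
    by (simp add: field_simps power_divide)
  also have "\<dots> = real ((2 ^ Suc n * a) div c) / 2 ^ Suc n"
    unfolding digit_step[OF assms(1)] by simp
  finally show ?case .
qed

lemma binexp_sums:
  assumes "a < c"
  shows "(\<lambda>j. (1/2::real) ^ Suc j * (if digit a c j = 1 then 1 else 0)) sums (real a / real c)"
proof -
  have c: "0 < c" using assms by simp
  let ?e = "\<lambda>n. real ((2 ^ n * a) mod c) / (real c * 2 ^ n)"
  have ps: "(\<Sum>j<n. (1/2::real) ^ Suc j * (if digit a c j = 1 then 1 else 0)) = real a / real c - ?e n" for n
  proof -
    have "real ((2 ^ n * a) div c) * real c = real (2 ^ n * a) - real ((2 ^ n * a) mod c)"
      using div_mult_mod_eq[of "2^n*a" c] by (metis add_diff_cancel_right' of_nat_add of_nat_mult)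
    then show ?thesis unfolding binexp_partial[OF c assms] using c by (simp add: field_simps)
  qed
  have "?e \<longlonglongrightarrow> 0"
  proof (rule tendsto_sandwich[of "\<lambda>_. 0" _ _ "\<lambda>n. (1/2::real) ^ n"])
    show "\<forall>\<^sub>F n in sequentially. 0 \<le> ?e n" by simp
    show "\<forall>\<^sub>F n in sequentially. ?e n \<le> (1/2) ^ n"
    proof (intro always_eventually allI)
      fix n
      have "real ((2 ^ n * a) mod c) \<le> real c" using c by simp
      then show "?e n \<le> (1/2) ^ n" using c by (simp add: field_simps power_divide)
    qed
    show "(\<lambda>n. (1/2::real) ^ n) \<longlonglongrightarrow> 0" by (rule LIMSEQ_realpow_zero) auto
  qed simp
  then have "(\<lambda>n. real a / real c - ?e n) \<longlonglongrightarrow> real a / real c - 0"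
    by (intro tendsto_diff tendsto_const)
  then show ?thesis unfolding sums_def ps by simp
qed

lemma infsum_nat_sums:
  fixes f :: "nat \<Rightarrow> real"
  assumes "f sums S" "\<And>n. 0 \<le> f n"
  shows "infsum f UNIV = S"
  using sums_nonneg_imp_has_sum[OF assms] by (rule infsumI)




lemma PRE_coin: "PRE m (\<lambda>zs j. if j = 0 \<or> j = 1 then 1/2 else 0)"
proof -
  have r: "PRE (length [\<lambda>_::nat list. 0::nat]) (\<lambda>xs y. if y = hd xs \<or> y = Suc (hd xs) then 1 / 2 else 0)"
    using PR_rand by (simp add: PR_PRE)
  have "PRE m (pf_comp (\<lambda>xs y. if y = hd xs \<or> y = Suc (hd xs) then 1 / 2 else 0) (map dirac [\<lambda>_. 0]))"
    apply (rule PRE_comp)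
    using r apply simp
    using PRD_const[of m 0] by (simp add: PRD_def)
  then show ?thesis
  proof (rule PRE_cong)
    fix xs :: "nat list"
    show "pf_comp (\<lambda>xs y. if y = hd xs \<or> y = Suc (hd xs) then 1 / 2 else 0) (map dirac [\<lambda>_. 0]) xs =
      (\<lambda>j. if j = 0 \<or> j = 1 then 1/2 else 0)"
      by (rule ext) (simp only: comp_dirac[OF refl], simp)
  qed
qed

lemma PRE_geo: "PRE m (\<lambda>ys j. (1/2::real) ^ Suc j)"
proof -
  have e: "(\<Sum>\<^sub>\<infinity>l\<in>{0<..}. (if (l::nat) = 0 \<or> l = Suc 0 then 1/2 else 0::real)) = 1/2"
    by (subst infsum_single_supp[of "Suc 0"]) auto
  have "PRE m (pf_mu (\<lambda>zs j. if j = 0 \<or> j = 1 then 1/2 else 0))"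
    by (rule PRE_mu) (rule PRE_coin)
  then show ?thesis by (rule PRE_cong) (simp add: pf_mu_def e)
qed

lemma PRD_digit: "PRD k a \<Longrightarrow> PRD k c \<Longrightarrow> PRD k j \<Longrightarrow> PRD k (\<lambda>xs. digit (a xs) (c xs) (j xs))"
  unfolding digit_def by (intro PRD_mod PRD_div PRD_mult PRD_pow2 PRD_Suc PRD_const)

definition sprob :: "nat \<Rightarrow> nat \<Rightarrow> real" where
  "sprob a c = (if c \<le> a then 1 else real a / real c)"

lemma bern_values:
  fixes a c :: nat
  defines "P \<equiv> \<lambda>j. (if c \<le> a then 0 else if digit a c j = 1 then 0 else 1::nat)"
  shows "(\<Sum>\<^sub>\<infinity>j\<in>UNIV. (1/2::real) ^ Suc j * (if w = P j then 1 else 0)) =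
     (if w = 0 then sprob a c else if w = 1 then 1 - sprob a c else 0)"
proof -
  have geo: "(\<Sum>\<^sub>\<infinity>j\<in>UNIV. (1/2::real) ^ Suc j) = 1"
    by (rule infsum_nat_sums[OF half_pow_sums]) simp
  show ?thesis
  proof (cases "c \<le> a")
    case True
    then show ?thesis using geo by (simp add: P_def sprob_def)
  next
    case False
    then have ac: "a < c" by simp
    have s1: "(\<lambda>j. (1/2::real) ^ Suc j * (if digit a c j = 1 then 1 else 0)) sums (real a / real c)"
      by (rule binexp_sums[OF ac])
    have s0: "(\<lambda>j. (1/2::real) ^ Suc j * (if digit a c j = 1 then 0 else 1)) sums (1 - real a / real c)"
    proof -
      have "(\<lambda>j. (1/2::real) ^ Suc j - (1/2::real) ^ Suc j * (if digit a c j = 1 then 1 else 0)) sums (1 - real a / real c)"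
        by (rule sums_diff[OF half_pow_sums s1])
      then show ?thesis by (rule sums_cong[THEN iffD1, rotated]) auto
    qed
    show ?thesis
    proof (cases "w = 0")
      case True
      then have "(\<Sum>\<^sub>\<infinity>j\<in>UNIV. (1/2::real) ^ Suc j * (if w = P j then 1 else 0)) =
          (\<Sum>\<^sub>\<infinity>j\<in>UNIV. (1/2::real) ^ Suc j * (if digit a c j = 1 then 1 else 0))"
        using False by (intro infsum_cong) (auto simp: P_def)
      also have "\<dots> = real a / real c" by (rule infsum_nat_sums[OF s1]) simp
      finally show ?thesis using True False by (simp add: sprob_def)
    next
      case w0: False
      show ?thesis
      proof (cases "w = 1")
        case True
        then have "(\<Sum>\<^sub>\<infinity>j\<in>UNIV. (1/2::real) ^ Suc j * (if w = P j then 1 else 0)) =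
            (\<Sum>\<^sub>\<infinity>j\<in>UNIV. (1/2::real) ^ Suc j * (if digit a c j = 1 then 0 else 1))"
          using False by (intro infsum_cong) (auto simp: P_def)
        also have "\<dots> = 1 - real a / real c" by (rule infsum_nat_sums[OF s0]) simp
        finally show ?thesis using True False by (simp add: sprob_def)
      next
        case False
        then have "\<And>j. w \<noteq> P j" using w0 by (auto simp: P_def)
        then show ?thesis using w0 False by simp
      qed
    qed
  qed
qed

lemma PRE_bern_mu:
  assumes a: "PRD (Suc k) a" and c: "PRD (Suc k) c"
  shows "\<exists>MU. PRE k MU \<and> (\<forall>xs y. length xs = k \<longrightarrow>
     MU xs y = sprob (a (xs @ [y])) (c (xs @ [y])) * (\<Prod>z<y. (1 - sprob (a (xs @ [z])) (c (xs @ [z])))))"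
proof -
  define Pd where "Pd = (\<lambda>zs. if c (take (Suc k) zs) \<le> a (take (Suc k) zs) then 0
      else if digit (a (take (Suc k) zs)) (c (take (Suc k) zs)) (zs ! Suc k) = 1 then 0 else 1::nat)"
  have pd: "PRD (Suc (Suc k)) Pd"
    unfolding Pd_def
    by (intro PRD_if PRP_le PRP_eq PRD_digit PRD_lift[OF a] PRD_lift[OF c] PRD_proj PRD_const) auto
  define B where "B = pf_comp (dirac Pd) (map dirac (projs (Suc k)) @ [\<lambda>ys j. (1/2::real) ^ Suc j])"
  have B: "PRE (Suc k) B"
    unfolding B_def
  proof (rule PRE_comp)
    show "PRE (length (map dirac (projs (Suc k)) @ [\<lambda>ys j. (1/2::real) ^ Suc j])) (dirac Pd)"
      using pd by (simp add: PRD_def)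
    show "\<forall>g\<in>set (map dirac (projs (Suc k)) @ [\<lambda>ys j. (1/2::real) ^ Suc j]). PRE (Suc k) g"
      using PRD_projs[of "Suc k" "Suc k"] PRE_geo by (auto simp: PRD_def)
  qed
  have Bv: "B ys w = (if w = 0 then sprob (a ys) (c ys) else if w = 1 then 1 - sprob (a ys) (c ys) else 0)"
    if "length ys = Suc k" for ys w
  proof -
    have "B ys w = (\<Sum>\<^sub>\<infinity>j\<in>UNIV. (1/2::real) ^ Suc j * dirac Pd (ys @ [j]) w)"
      unfolding B_def by (rule bind_lemma[OF that])
    also have "\<dots> = (\<Sum>\<^sub>\<infinity>j\<in>UNIV. (1/2::real) ^ Suc j * (if w = (if c ys \<le> a ys then 0
           else if digit (a ys) (c ys) j = 1 then 0 else 1) then 1 else 0))"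
      using that by (intro infsum_cong) (simp add: dirac_def Pd_def nth_append)
    also have "\<dots> = (if w = 0 then sprob (a ys) (c ys) else if w = 1 then 1 - sprob (a ys) (c ys) else 0)"
      by (rule bern_values)
    finally show ?thesis .
  qed
  have Bs: "(\<Sum>\<^sub>\<infinity>l\<in>{0<..}. B ys l) = 1 - sprob (a ys) (c ys)" if "length ys = Suc k" for ys
    by (subst infsum_single_supp[of 1]) (auto simp: Bv[OF that])
  have "PRE k (pf_mu B)" using B by (intro PRE_mu) simp
  moreover have "pf_mu B xs y = sprob (a (xs @ [y])) (c (xs @ [y])) * (\<Prod>z<y. (1 - sprob (a (xs @ [z])) (c (xs @ [z]))))"
    if "length xs = k" for xs y
    unfolding pf_mu_def using that by (simp add: Bv Bs)
  ultimately show ?thesis by blast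
qed




section \<open>Enumeration of choice sequences\<close>

primrec cenc :: "bool list \<Rightarrow> nat" where
  "cenc [] = 1" | "cenc (b # l) = 2 * cenc l + (if b then 1 else 0)"

lemma cenc_pos: "1 \<le> cenc l" by (induction l) auto

lemma chs_cenc: "chs (cenc l) = l"
proof (induction l)
  case Nil then show ?case by (simp add: chs.simps)
next
  case (Cons b l)
  have "1 \<le> cenc l" by (rule cenc_pos)
  then have "\<not> cenc (b # l) \<le> 1" by auto
  moreover have "cenc (b # l) div 2 = cenc l" by auto
  moreover have "odd (cenc (b # l)) = b" by auto
  ultimately show ?case using Cons by (subst chs.simps) simp
qed

lemma cenc_chs: "1 \<le> m \<Longrightarrow> cenc (chs m) = m"
proof (induction m rule: chs.induct)
  case (1 n)
  show ?case
  proof (cases "n \<le> 1")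
    case True then show ?thesis using 1 by (simp add: chs.simps)
  next
    case False
    then have IH: "cenc (chs (n div 2)) = n div 2" using 1 by auto
    have c: "chs n = odd n # chs (n div 2)" using False by (subst chs.simps) simp
    show ?thesis unfolding c using IH by (cases "even n") auto
  qed
qed

lemma inj_ech: "inj ech"
proof (rule injI)
  fix x y assume "ech x = ech y"
  then have "cenc (chs (Suc x)) = cenc (chs (Suc y))" by (simp add: ech_def)
  then show "x = y" by (simp add: cenc_chs)
qed

lemma ech_surj: "ech (cenc l - 1) = l"
  using cenc_pos[of l] by (simp add: ech_def chs_cenc)

lemma length_ech: "length (ech z) \<le> z"
  using length_chs[of "Suc z"] by (simp add: ech_def)

section \<open>Kraft inequality\<close>

definition pfree :: "bool list set \<Rightarrow> bool" where
  "pfree H \<longleftrightarrow> (\<forall>a\<in>H. \<forall>c. a @ c \<in> H \<longrightarrow> c = [])"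

lemma kraft:
  "finite H \<Longrightarrow> pfree H \<Longrightarrow> (\<forall>b\<in>H. length b \<le> N) \<Longrightarrow> (\<Sum>b\<in>H. (1/2::real) ^ length b) \<le> 1"
proof (induction N arbitrary: H)
  case 0
  then have "H \<subseteq> {[]}" by auto
  then have "H = {} \<or> H = {[]}" by auto
  then show ?case by auto
next
  case (Suc N)
  show ?case
  proof (cases "[] \<in> H")
    case True
    then have "H = {[]}" using Suc.prems(2) unfolding pfree_def by fastforce
    then show ?thesis by simp
  next
    case False
    define H1 where "H1 = {l. True # l \<in> H}"
    define H0 where "H0 = {l. False # l \<in> H}"
    have split: "H = Cons True ` H1 \<union> Cons False ` H0"
    proof
      show "H \<subseteq> Cons True ` H1 \<union> Cons False ` H0"
      proof
        fix x assume "x \<in> H"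
        then obtain b l where "x = b # l" using False by (cases x) auto
        then show "x \<in> Cons True ` H1 \<union> Cons False ` H0" using \<open>x \<in> H\<close>
          by (cases b) (auto simp: H1_def H0_def)
      qed
    qed (auto simp: H1_def H0_def)
    have "H1 = Cons True -` H" "H0 = Cons False -` H" unfolding H1_def H0_def by auto
    then have fin: "finite H1" "finite H0"
      using Suc.prems(1) by (auto intro!: finite_vimageI simp: inj_on_def)
    have pf: "pfree H1" "pfree H0" using Suc.prems(2) unfolding pfree_def H1_def H0_def by auto
    have ln: "\<forall>b\<in>H1. length b \<le> N" "\<forall>b\<in>H0. length b \<le> N"
      using Suc.prems(3) unfolding H1_def H0_def by auto
    have S1: "(\<Sum>b\<in>H1. (1/2::real) ^ length b) \<le> 1" by (rule Suc.IH[OF fin(1) pf(1) ln(1)])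
    have S0: "(\<Sum>b\<in>H0. (1/2::real) ^ length b) \<le> 1" by (rule Suc.IH[OF fin(2) pf(2) ln(2)])
    have "(\<Sum>b\<in>H. (1/2::real) ^ length b) = (\<Sum>b\<in>Cons True ` H1. (1/2::real) ^ length b) + (\<Sum>b\<in>Cons False ` H0. (1/2::real) ^ length b)"
      unfolding split by (rule sum.union_disjoint) (use fin in auto)
    also have "\<dots> = (1/2) * (\<Sum>b\<in>H1. (1/2::real) ^ length b) + (1/2) * (\<Sum>b\<in>H0. (1/2::real) ^ length b)"
      by (simp add: sum.reindex sum_distrib_left)
    also have "\<dots> \<le> 1" using S1 S0 by simp
    finally show ?thesis .
  qed
qed

lemma halts_pfree: "pfree {bs. \<exists>u. halts_with M v bs u}"
  unfolding pfree_def
proof (intro ballI allI impI)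
  fix a c assume "a \<in> {bs. \<exists>u. halts_with M v bs u}" "a @ c \<in> {bs. \<exists>u. halts_with M v bs u}"
  then obtain u u' where h: "halts_with M v a u" "halts_with M v (a @ c) u'" by auto
  show "c = []"
  proof (rule ccontr)
    assume "c \<noteq> []"
    then have "length a < length (a @ c)" by simp
    then have "\<not> is_final M (run M (take (length a) (a @ c)) (initial M v))"
      using h(2) unfolding halts_with_def by blast
    moreover have "is_final M (run M a (initial M v))"
      using h(1) unfolding halts_with_def is_final_def by auto
    ultimately show False by simp
  qed
qed




lemma PRD_2arg:
  assumes F: "PRD (Suc k) (\<lambda>ys. F (take k ys) (ys ! k))" and a: "PRD m a" and km: "k \<le> m"
  shows "PRD m (\<lambda>zs. F (take k zs) (a zs))"
proof -
  have "PRD m (\<lambda>zs. (\<lambda>ys. F (take k ys) (ys ! k)) (map (\<lambda>h. h zs) (projs k @ [a])))"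
    by (rule PRD_comp[OF F]) (use a km in \<open>auto intro: PRD_projs'\<close>)
  then show ?thesis
  proof (rule PRD_cong)
    fix zs :: "nat list" assume "length zs = m"
    then have "map (\<lambda>h. h zs) (projs k @ [a]) = take k zs @ [a zs]" "length (take k zs) = k"
      using km by (auto simp: map_projs)
    then show "(\<lambda>ys. F (take k ys) (ys ! k)) (map (\<lambda>h. h zs) (projs k @ [a])) = F (take k zs) (a zs)"
      by (simp add: nth_append)
  qed
qed

lemma PRD_halt2: "wf_ptm M \<Longrightarrow> PRD m a \<Longrightarrow> k \<le> m \<Longrightarrow> PRD m (\<lambda>zs. halt M (take k zs) (a zs))"
  by (rule PRD_2arg[OF PRD_halt])
lemma PRD_lenz2: "wf_ptm M \<Longrightarrow> PRD m a \<Longrightarrow> k \<le> m \<Longrightarrow> PRD m (\<lambda>zs. lenz M (take k zs) (a zs))"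
  by (rule PRD_2arg[OF PRD_lenz])
lemma PRD_outv2: "wf_ptm M \<Longrightarrow> PRD m a \<Longrightarrow> k \<le> m \<Longrightarrow> PRD m (\<lambda>zs. outv M (take k zs) (a zs))"
  by (rule PRD_2arg[OF PRD_outv])

definition Aval :: "ptm \<Rightarrow> nat list \<Rightarrow> nat \<Rightarrow> nat" where
  "Aval M xs y = natrec 0 (\<lambda>i acc. 2 * acc + 2 * (halt M xs i * 2 ^ (i - lenz M xs i))) y"

lemma PRD_Aval: "wf_ptm M \<Longrightarrow> PRD (Suc k) (\<lambda>ys. Aval M (take k ys) (ys ! k))"
proof -
  assume wf: "wf_ptm M"
  let ?g = "\<lambda>zs. 2 * zs ! Suc (Suc k) + 2 * (halt M (take k zs) (zs ! Suc k) * 2 ^ (zs ! Suc k - lenz M (take k zs) (zs ! Suc k)))"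
  have g: "PRD (Suc k + 2) ?g"
    by (intro PRD_add PRD_mult PRD_const PRD_proj PRD_pow2 PRD_sub PRD_halt2[OF wf] PRD_lenz2[OF wf]) auto
  have "PRD (Suc k) (\<lambda>ys. natrec ((\<lambda>_. 0) ys) (\<lambda>i acc. ?g (ys @ [i, acc])) (ys ! k))"
    by (rule PRD_natrec[OF PRD_const g PRD_proj]) simp
  then show ?thesis
  proof (rule PRD_cong)
    fix ys :: "nat list" assume l: "length ys = Suc k"
    then have "(\<lambda>i acc. ?g (ys @ [i, acc])) = (\<lambda>i acc. 2 * acc + 2 * (halt M (take k ys) i * 2 ^ (i - lenz M (take k ys) i)))"
      by (auto simp: nth_append)
    then show "natrec ((\<lambda>_. 0) ys) (\<lambda>i acc. ?g (ys @ [i, acc])) (ys ! k) = Aval M (take k ys) (ys ! k)"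
      by (simp add: Aval_def)
  qed
qed

lemma telescope:
  fixes w :: "nat \<Rightarrow> real"
  assumes w0: "\<And>z. 0 \<le> w z" and k: "\<And>z. (\<Sum>i<Suc z. w i) \<le> 1"
  defines "W \<equiv> \<lambda>y. (\<Sum>i<y. w i)"
  defines "s \<equiv> \<lambda>y. (if 1 - W y \<le> w y then 1 else w y / (1 - W y))"
  shows "s y * (\<Prod>z<y. (1 - s z)) = w y"
proof -
  have key: "s y * (1 - W y) = w y" for y
  proof (cases "1 - W y \<le> w y")
    case True
    moreover have "W y + w y \<le> 1" using k[of y] by (simp add: W_def)
    ultimately show ?thesis by (simp add: s_def)
  next
    case False
    then have "1 - W y > 0" using w0[of y] by linarith
    then show ?thesis using False by (simp add: s_def)
  qed
  have "(\<Prod>z<y. (1 - s z)) = 1 - W y" for y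
  proof (induction y)
    case 0 then show ?case by (simp add: W_def)
  next
    case (Suc y)
    have "(\<Prod>z<Suc y. (1 - s z)) = (1 - W y) * (1 - s y)" using Suc by simp
    also have "\<dots> = (1 - W y) - s y * (1 - W y)" by (simp add: algebra_simps)
    also have "\<dots> = 1 - W (Suc y)" using key[of y] by (simp add: W_def)
    finally show ?case .
  qed
  then show ?thesis using key[of y] by simp
qed




lemma real_pow_diff: "l \<le> y \<Longrightarrow> real ((2::nat) ^ (y - l)) = 2 ^ y * (1/2) ^ l"
proof -
  assume "l \<le> y"
  then have "(2::real) ^ (y - l) = 2 ^ y / 2 ^ l" by (rule power_diff[rotated]) simp
  moreover have "real ((2::nat) ^ (y - l)) = (2::real) ^ (y - l)" by simp
  ultimately show ?thesis by (simp add: power_divide)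
qed

context
  fixes M :: ptm and xs :: "nat list"
  assumes wf: "wf_ptm M"
begin

definition "vv = bits (enc_tuple xs)"
definition "ww z = real (halt M xs z) * (1/2) ^ lenz M xs z"
definition "WW y = (\<Sum>i<y. ww i)"

lemma halt01: "halt M xs z = (if \<exists>u. halts_with M vv (ech z) u then 1 else 0)"
  using sem(1)[OF wf] by (simp add: vv_def)

lemma lenz_eq: "lenz M xs z = length (ech z)"
  using sem(2)[OF wf] by simp

lemma ww_nonneg: "0 \<le> ww z" by (simp add: ww_def)

lemma kraft_ww: "(\<Sum>i<Suc y. ww i) \<le> 1"
proof -
  define Z where "Z = {z. z < Suc y \<and> halt M xs z = 1}"
  have fZ: "finite Z" unfolding Z_def by simp
  have "(\<Sum>i<Suc y. ww i) = (\<Sum>i\<in>Z. ww i)"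
    unfolding Z_def by (rule sum.mono_neutral_right) (auto simp: ww_def halt01)
  also have "\<dots> = (\<Sum>i\<in>Z. (1/2::real) ^ length (ech i))"
    unfolding Z_def by (intro sum.cong) (auto simp: ww_def lenz_eq)
  also have "\<dots> = (\<Sum>b\<in>ech ` Z. (1/2::real) ^ length b)"
    by (subst sum.reindex) (auto intro: inj_on_subset[OF inj_ech])
  also have "\<dots> \<le> 1"
  proof (rule kraft)
    show "finite (ech ` Z)" using fZ by simp
    have "ech ` Z \<subseteq> {bs. \<exists>u. halts_with M vv bs u}"
      unfolding Z_def by (auto simp: halt01 split: if_splits)
    then show "pfree (ech ` Z)" using halts_pfree[of M vv] unfolding pfree_def by blast
    show "\<forall>b\<in>ech ` Z. length b \<le> y"
    proof
      fix b assume "b \<in> ech ` Z"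
      then obtain z where "z < Suc y" "b = ech z" unfolding Z_def by auto
      then show "length b \<le> y" using length_ech[of z] by simp
    qed
  qed
  finally show ?thesis .
qed

lemma Aval_real: "real (Aval M xs y) = 2 ^ y * WW y"
proof (induction y)
  case 0 then show ?case by (simp add: Aval_def WW_def)
next
  case (Suc y)
  have le: "lenz M xs y \<le> y" using length_ech[of y] by (simp add: lenz_eq)
  have p: "real (2 ^ (y - lenz M xs y)) = 2 ^ y * (1/2) ^ lenz M xs y"
    using le by (rule real_pow_diff)
  have "real (Aval M xs (Suc y)) = 2 * real (Aval M xs y) + 2 * (real (halt M xs y) * real (2 ^ (y - lenz M xs y)))"
    by (simp add: Aval_def)
  also have "\<dots> = 2 ^ Suc y * WW (Suc y)"
    unfolding Suc p by (simp add: WW_def ww_def algebra_simps)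
  finally show ?case .
qed

lemma Aval_le: "Aval M xs y \<le> 2 ^ y"
proof -
  have "WW y \<le> 1" using kraft_ww[of y] ww_nonneg[of y] by (simp add: WW_def)
  then have "real (Aval M xs y) \<le> 2 ^ y" unfolding Aval_real by simp
  then show ?thesis by (metis of_nat_le_iff of_nat_numeral of_nat_power)
qed

definition "aaa y = halt M xs y * 2 ^ (y - lenz M xs y)"
definition "ccc y = 2 ^ y - Aval M xs y"

lemma sprob_eq: "sprob (aaa y) (ccc y) = (if 1 - WW y \<le> ww y then 1 else ww y / (1 - WW y))"
proof -
  have le: "lenz M xs y \<le> y" using length_ech[of y] by (simp add: lenz_eq)
  have ra: "real (aaa y) = 2 ^ y * ww y"
    using real_pow_diff[OF le] by (simp add: aaa_def ww_def)
  have rc: "real (ccc y) = 2 ^ y * (1 - WW y)"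
    using Aval_le[of y] by (simp add: ccc_def of_nat_diff Aval_real algebra_simps)
  have "ccc y \<le> aaa y \<longleftrightarrow> real (ccc y) \<le> real (aaa y)" by simp
  also have "\<dots> \<longleftrightarrow> 1 - WW y \<le> ww y" unfolding ra rc by simp
  finally have c: "ccc y \<le> aaa y \<longleftrightarrow> 1 - WW y \<le> ww y" .
  show ?thesis unfolding sprob_def c ra rc by simp
qed

lemma mu_value: "sprob (aaa y) (ccc y) * (\<Prod>z<y. (1 - sprob (aaa z) (ccc z))) = ww y"
  unfolding sprob_eq WW_def using telescope[of ww, OF ww_nonneg kraft_ww] by simp

end

theorem PC_PRE:
  assumes "PC k f"
  shows "PRE k f"
proof -
  from assms obtain M where wf: "wf_ptm M" and
    f: "\<And>xs y. length xs = k \<Longrightarrow> f xs y = IO M (bits (enc_tuple xs)) (bits (bin y))"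
    unfolding PC_def by auto
  define aaf where "aaf = (\<lambda>ys. halt M (take k ys) (ys ! k) * 2 ^ (ys ! k - lenz M (take k ys) (ys ! k)))"
  define ccf where "ccf = (\<lambda>ys. 2 ^ (ys ! k) - Aval M (take k ys) (ys ! k))"
  have pa: "PRD (Suc k) aaf" unfolding aaf_def
    by (intro PRD_mult PRD_pow2 PRD_sub PRD_halt[OF wf] PRD_lenz[OF wf] PRD_proj) auto
  have pc: "PRD (Suc k) ccf" unfolding ccf_def
    by (intro PRD_sub PRD_pow2 PRD_Aval[OF wf] PRD_proj) auto
  obtain MU where MU: "PRE k MU" and MUv: "\<And>xs y. length xs = k \<Longrightarrow>
     MU xs y = sprob (aaf (xs @ [y])) (ccf (xs @ [y])) * (\<Prod>z<y. (1 - sprob (aaf (xs @ [z])) (ccf (xs @ [z]))))"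
    using PRE_bern_mu[OF pa pc] by blast
  have MUw: "MU xs y = ww M xs y" if "length xs = k" for xs y
  proof -
    have "aaf (xs @ [z]) = aaa M xs z" "ccf (xs @ [z]) = ccc M xs z" for z
      using that wf by (auto simp: aaf_def ccf_def aaa_def ccc_def nth_append)
    then show ?thesis using MUv[OF that] mu_value[OF wf] by simp
  qed
  define h where "h = (\<lambda>ys. if outv M (take k ys) (ys ! k) = Suc (ys ! Suc k) then 0 else 1::nat)"
  have ph: "PRD (Suc k + 1) h" unfolding h_def
    by (intro PRD_if PRP_eq PRD_outv2[OF wf] PRD_Suc PRD_proj PRD_const) auto
  define OUT where "OUT = (\<lambda>ys y. if h (ys @ [y]) = 0 \<and> (\<forall>z<y. h (ys @ [z]) \<noteq> 0) then 1 else 0::real)"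
  have OUT: "PRE (Suc k) OUT" unfolding OUT_def by (rule PRE_mu_dirac[OF ph])
  have OUTv: "OUT (xs @ [z]) y = (if outv M xs z = Suc y then 1 else 0)" if "length xs = k" for xs z y
    using that by (auto simp: OUT_def h_def nth_append)
  define G where "G = pf_comp OUT (map dirac (projs k) @ [MU])"
  have G: "PRE k G" unfolding G_def
  proof (rule PRE_comp)
    show "PRE (length (map dirac (projs k) @ [MU])) OUT" using OUT by simp
    show "\<forall>g\<in>set (map dirac (projs k) @ [MU]). PRE k g"
      using PRD_projs[of k k] MU by (auto simp: PRD_def)
  qed
  show ?thesis
  proof (rule PRE_cong[OF G])
    fix xs :: "nat list" assume l: "length xs = k"
    show "G xs = f xs"
    proof (rule ext)
      fix y
      let ?v = "bits (enc_tuple xs)"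
      let ?Z = "{z. halts_with M ?v (ech z) (bits (bin y))}"
      have "G xs y = (\<Sum>\<^sub>\<infinity>z\<in>UNIV. MU xs z * OUT (xs @ [z]) y)"
        unfolding G_def by (rule bind_lemma[OF l])
      also have "\<dots> = (\<Sum>\<^sub>\<infinity>z\<in>UNIV. (if halts_with M ?v (ech z) (bits (bin y)) then (1/2::real) ^ length (ech z) else 0))"
      proof (rule infsum_cong)
        fix z
        have o: "outv M xs z = Suc y \<longleftrightarrow> halts_with M ?v (ech z) (bits (bin y))"
          by (rule sem(3)[OF wf])
        have "halts_with M ?v (ech z) (bits (bin y)) \<Longrightarrow> halt M xs z = 1"
          using sem(1)[OF wf, of xs z] by auto
        then show "MU xs z * OUT (xs @ [z]) y = (if halts_with M ?v (ech z) (bits (bin y)) then (1/2::real) ^ length (ech z) else 0)"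
          unfolding MUw[OF l] OUTv[OF l] o using sem(2)[OF wf, of xs z] wf by (auto simp: ww_def)
      qed
      also have "\<dots> = (\<Sum>\<^sub>\<infinity>z\<in>?Z. (1/2::real) ^ length (ech z))"
        by (rule infsum_cong_neutral) auto
      also have "\<dots> = (\<Sum>\<^sub>\<infinity>bs\<in>ech ` ?Z. (1/2::real) ^ length bs)"
        by (subst infsum_reindex) (auto intro: inj_on_subset[OF inj_ech] simp: o_def)
      also have "ech ` ?Z = {bs. halts_with M ?v bs (bits (bin y))}"
      proof
        show "{bs. halts_with M ?v bs (bits (bin y))} \<subseteq> ech ` ?Z"
        proof
          fix bs assume "bs \<in> {bs. halts_with M ?v bs (bits (bin y))}"
          then show "bs \<in> ech ` ?Z" using ech_surj[of bs] by (intro image_eqI[of _ _ "cenc bs - 1"]) auto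
        qed
      qed auto
      also have "(\<Sum>\<^sub>\<infinity>bs\<in>{bs. halts_with M ?v bs (bits (bin y))}. (1/2::real) ^ length bs) = f xs y"
        unfolding f[OF l] IO_def ..
      finally show "G xs y = f xs y" .
    qed
  qed
qed

theorem mainTheorem12:
  assumes "PC k f"
  shows "\<exists>g. PR k g \<and> (\<forall>xs. length xs = k \<longrightarrow> g xs = f xs)"
  using PC_PRE[OF assms] unfolding PRE_def .


end
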